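(* Let $1\le p\le 2$, let $f\in\mathcal{L}^p(\mathbb{R})$ be real-valued, and suppose $t\mapsto t f(t)$ belongs to $\mathcal{L}^p(\mathbb{R})\cap BV_0(\mathbb{R})$. Then, after redefining $\mathcal{F}^S_p(f)$ on a set of measure zero, $\mathcal{F}^S_p(f)\in ACG^*(\mathbb{R})$.
   Context: $BV_0(\mathbb{R})$: real functions of bounded variation on $\mathbb{R}$ vanishing at $\pm\infty$. $\mathcal{F}_1(f)(s)=\frac{1}{\sqrt{2\pi}}\int_{\mathbb{R}}e^{-isx}f(x)dx$ for $f\in\mathcal{L}^1$; $\mathcal{F}_2$ is the Plancherel extension to $\mathcal{L}^2$; for $1<p<2$, $\mathcal{F}_p(f)=\mathcal{F}_1(f_1)+\mathcal{F}_2(f_2)$ for any decomposition $f=f_1+f_2$, $f_1\in\mathcal{L}^1\cap\mathcal{L}^p$, $f_2\in\mathcal{L}^2\cap\mathcal{L}^p$. For real-valued $f$, the Sine Fourier transform is $\mathcal{F}^S_p(f):=-\mathrm{Im}\,\mathcal{F}_p(f)$, so $\mathcal{F}_p(f)=\mathcal{F}^C_p(f)-i\mathcal{F}^S_p(f)$ with $\mathcal{F}^C_p(f)=\mathrm{Re}\,\mathcal{F}_p(f)$. A function $F$ is $AC^*$ on a set $E$ if for every $\epsilon>0$ there is $\eta>0$ such that for every finite family of nonoverlapping intervals $[c_k,d_k]$ with endpoints in $E$ and $\sum(d_k-c_k)<\eta$, $\sum_k\omega(F,[c_k,d_k])<\epsilon$ ($\omega$ = oscillation); $F$ is $ACG^*$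 on $\mathbb{R}$ if $F$ is continuous and $\mathbb{R}$ is a countable union of sets on each of which $F$ is $AC^*$. *)

theory Defs
  imports "HOL-Analysis.Analysis"
begin

definition Lp_real :: "real \<Rightarrow> (real \<Rightarrow> real) \<Rightarrow> bool" where
  "Lp_real p f \<longleftrightarrow> f \<in> borel_measurable lebesgue \<and> integrable lebesgue (\<lambda>x. \<bar>f x\<bar> powr p)"

definition bounded_variation_R :: "(real \<Rightarrow> real) \<Rightarrow> bool" where
  "bounded_variation_R g \<longleftrightarrow>
     (\<exists>M. \<forall>(n::nat) (x::nat \<Rightarrow> real). (\<forall>k<n. x k \<le> x (Suc k)) \<longrightarrow>
        (\<Sum>k<n. \<bar>g (x (Suc k)) - g (x k)\<bar>) \<le> M)"

definition BV0 :: "(real \<Rightarrow> real) \<Rightarrow> bool" where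
  "BV0 g \<longleftrightarrow> bounded_variation_R g \<and> (g \<longlongrightarrow> 0) at_top \<and> (g \<longlongrightarrow> 0) at_bot"

definition fourier1 :: "(real \<Rightarrow> real) \<Rightarrow> real \<Rightarrow> complex" where
  "fourier1 f s = (LINT x|lebesgue. cis (- s * x) * complex_of_real (f x)) / complex_of_real (sqrt (2 * pi))"

text \<open>H is (a version of) the Plancherel transform F_2(f) of f \<in> L^2:
  the L^2-limit of the L^1 transforms of the truncations f \<cdot> 1_[-n,n].\<close>
definition is_fourier2 :: "(real \<Rightarrow> real) \<Rightarrow> (real \<Rightarrow> complex) \<Rightarrow> bool" where
  "is_fourier2 f H \<longleftrightarrow>
     H \<in> borel_measurable lebesgue \<and> integrable lebesgue (\<lambda>s. (cmod (H s))\<^sup>2) \<and>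
     (\<lambda>n::nat. LINT s|lebesgue.
         (cmod (fourier1 (\<lambda>x. indicator {- real n..real n} x * f x) s - H s))\<^sup>2)
       \<longlonglongrightarrow> 0"

text \<open>G is a version of F_p(f), 1 \<le> p \<le> 2 (determined up to null sets).\<close>
definition is_fourier_p :: "real \<Rightarrow> (real \<Rightarrow> real) \<Rightarrow> (real \<Rightarrow> complex) \<Rightarrow> bool" where
  "is_fourier_p p f G \<longleftrightarrow>
     (if p = 1 then (AE s in lebesgue. G s = fourier1 f s)
      else (\<exists>f1 f2 H. (\<forall>x. f x = f1 x + f2 x) \<and>
              integrable lebesgue f1 \<and> Lp_real p f1 \<and> Lp_real 2 f2 \<and> Lp_real p f2 \<and>
              is_fourier2 f2 H \<and>
              (AE s in lebesgue. G s = fourier1 f1 s + H s)))"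

definition osc :: "(real \<Rightarrow> real) \<Rightarrow> real \<Rightarrow> real \<Rightarrow> real" where
  "osc F c d = (SUP x\<in>{c..d}. F x) - (INF x\<in>{c..d}. F x)"

definition AC_star_on :: "(real \<Rightarrow> real) \<Rightarrow> real set \<Rightarrow> bool" where
  "AC_star_on F E \<longleftrightarrow>
     (\<forall>\<epsilon>>0. \<exists>\<eta>>0. \<forall>(n::nat) (c::nat \<Rightarrow> real) (d::nat \<Rightarrow> real).
        (\<forall>k<n. c k \<in> E \<and> d k \<in> E \<and> c k \<le> d k) \<and>
        (\<forall>i<n. \<forall>j<n. i \<noteq> j \<longrightarrow> d i \<le> c j \<or> d j \<le> c i) \<and>
        (\<Sum>k<n. d k - c k) < \<eta> \<longrightarrow>
        (\<Sum>k<n. osc F (c k) (d k)) < \<epsilon>)"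

definition ACG_star :: "(real \<Rightarrow> real) \<Rightarrow> bool" where
  "ACG_star F \<longleftrightarrow> continuous_on UNIV F \<and>
     (\<exists>E::nat \<Rightarrow> real set. (\<Union>n. E n) = UNIV \<and> (\<forall>n. AC_star_on F (E n)))"

end

theory Submission
  imports Defs "HOL-Probability.Sinc_Integral"
begin

lemma bv_step_bound:
  assumes "bounded_variation_R g"
  shows "\<exists>M. \<forall>x y. \<bar>g y - g x\<bar> \<le> M"
proof -
  obtain M where M: "\<And>n (x::nat\<Rightarrow>real). (\<forall>k<n. x k \<le> x (Suc k)) \<Longrightarrow> (\<Sum>k<n. \<bar>g (x (Suc k)) - g (x k)\<bar>) \<le> M"
    using assms unfolding bounded_variation_R_def by blast
  have "\<bar>g y - g x\<bar> \<le> M" for x y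
  proof (cases "x \<le> y")
    case True
    have "(\<Sum>k<1. \<bar>g ((\<lambda>k. if k = 0 then x else y) (Suc k)) - g ((\<lambda>k. if k = 0 then x else y) k)\<bar>) \<le> M"
      by (rule M) (use True in auto)
    then show ?thesis by simp
  next
    case False
    have "(\<Sum>k<1. \<bar>g ((\<lambda>k. if k = 0 then y else x) (Suc k)) - g ((\<lambda>k. if k = 0 then y else x) k)\<bar>) \<le> M"
      by (rule M) (use False in auto)
    then show ?thesis by simp
  qed
  then show ?thesis by blast
qed

lemma BV0_bounded:
  assumes "BV0 g"
  shows "\<exists>B. \<forall>x. \<bar>g x\<bar> \<le> B"
proof -
  obtain M where M: "\<And>x y. \<bar>g y - g x\<bar> \<le> M"
    using bv_step_bound assms unfolding BV0_def by blast
  have "\<bar>g x\<bar> \<le> \<bar>g 0\<bar> + M" for x using M[of 0 x] by linarith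
  then show ?thesis by blast
qed

definition varfun :: "(real \<Rightarrow> real) \<Rightarrow> real \<Rightarrow> real" where
  "varfun g x = Sup {s. \<exists>n (p::nat\<Rightarrow>real). (\<forall>k<n. p k \<le> p (Suc k)) \<and> p n \<le> x \<and>
      s = (\<Sum>k<n. \<bar>g (p (Suc k)) - g (p k)\<bar>)}"

lemma varfun_props:
  assumes "bounded_variation_R g"
  shows "\<exists>M. \<forall>x. 0 \<le> varfun g x \<and> varfun g x \<le> M"
    and "\<And>x y. x \<le> y \<Longrightarrow> varfun g x + \<bar>g y - g x\<bar> \<le> varfun g y"
proof -
  obtain M where M: "\<And>n (x::nat\<Rightarrow>real). (\<forall>k<n. x k \<le> x (Suc k)) \<Longrightarrow> (\<Sum>k<n. \<bar>g (x (Suc k)) - g (x k)\<bar>) \<le> M"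
    using assms unfolding bounded_variation_R_def by blast
  define S where "S x = {s. \<exists>n (p::nat\<Rightarrow>real). (\<forall>k<n. p k \<le> p (Suc k)) \<and> p n \<le> x \<and>
      s = (\<Sum>k<n. \<bar>g (p (Suc k)) - g (p k)\<bar>)}" for x
  have V: "varfun g x = Sup (S x)" for x unfolding varfun_def S_def by simp
  have ne: "0 \<in> S x" for x unfolding S_def
    by (rule CollectI, rule exI[of _ 0], rule exI[of _ "\<lambda>_. x"]) auto
  have bdd: "bdd_above (S x)" for x
    unfolding S_def bdd_above_def using M by blast
  have le: "s \<le> M" if "s \<in> S x" for s x using that M unfolding S_def by blast
  show "\<exists>M. \<forall>x. 0 \<le> varfun g x \<and> varfun g x \<le> M"
    using ne bdd le unfolding V
    by (metis cSup_least cSup_upper empty_iff)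
  show "varfun g x + \<bar>g y - g x\<bar> \<le> varfun g y" if xy: "x \<le> y" for x y
  proof -
    have "s \<le> varfun g y - \<bar>g y - g x\<bar>" if "s \<in> S x" for s
    proof -
      obtain n p where p: "\<forall>k<n. p k \<le> p (Suc k)" "p n \<le> x"
        and s: "s = (\<Sum>k<n. \<bar>g (p (Suc k)) - g (p k)\<bar>)"
        using \<open>s \<in> S x\<close> unfolding S_def by blast
      define q where "q k = (if k \<le> n then p k else if k = Suc n then x else y)" for k
      have qmono: "\<forall>k<Suc (Suc n). q k \<le> q (Suc k)"
        using p xy unfolding q_def by (auto simp: less_Suc_eq)
      have "(\<Sum>k<Suc (Suc n). \<bar>g (q (Suc k)) - g (q k)\<bar>) =
          (\<Sum>k<n. \<bar>g (q (Suc k)) - g (q k)\<bar>) + \<bar>g x - g (p n)\<bar> + \<bar>g y - g x\<bar>"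
        by (simp add: q_def)
      also have "(\<Sum>k<n. \<bar>g (q (Suc k)) - g (q k)\<bar>) = s"
        unfolding s by (rule sum.cong) (auto simp: q_def)
      finally have eq: "(\<Sum>k<Suc (Suc n). \<bar>g (q (Suc k)) - g (q k)\<bar>) = s + \<bar>g x - g (p n)\<bar> + \<bar>g y - g x\<bar>" .
      have "(\<Sum>k<Suc (Suc n). \<bar>g (q (Suc k)) - g (q k)\<bar>) \<in> S y"
        unfolding S_def using qmono by (auto simp: q_def intro!: exI[of _ "Suc (Suc n)"] exI[of _ q])
      then have "(\<Sum>k<Suc (Suc n). \<bar>g (q (Suc k)) - g (q k)\<bar>) \<le> varfun g y"
        unfolding V by (rule cSup_upper[OF _ bdd])
      then show ?thesis using eq by linarith
    qed
    then have "varfun g x \<le> varfun g y - \<bar>g y - g x\<bar>"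
      unfolding V[of x] using ne by (intro cSup_least) auto
    then show ?thesis by linarith
  qed
qed

lemma BV0_decomp:
  assumes "BV0 g"
  shows "\<exists>\<phi>1 \<phi>2 B. mono \<phi>1 \<and> mono \<phi>2 \<and> (\<forall>x. \<bar>\<phi>1 x\<bar> \<le> B \<and> \<bar>\<phi>2 x\<bar> \<le> B) \<and>
     (\<forall>x. g x = (\<phi>1 x - \<phi>2 x) / 2)"
proof -
  have bv: "bounded_variation_R g" using assms unfolding BV0_def by simp
  obtain M where M: "\<And>x. 0 \<le> varfun g x \<and> varfun g x \<le> M" using varfun_props(1)[OF bv] by blast
  obtain B where B: "\<And>x. \<bar>g x\<bar> \<le> B" using BV0_bounded[OF assms] by blast
  have inc: "x \<le> y \<Longrightarrow> varfun g x + \<bar>g y - g x\<bar> \<le> varfun g y" for x y using varfun_props(2)[OF bv] .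
  show ?thesis
  proof (intro exI conjI allI)
    show "mono (\<lambda>x. varfun g x + g x)" unfolding mono_def using inc by (smt (verit))
    show "mono (\<lambda>x. varfun g x - g x)" unfolding mono_def using inc by (smt (verit))
    fix x
    show "\<bar>varfun g x + g x\<bar> \<le> M + B" "\<bar>varfun g x - g x\<bar> \<le> M + B" using M[of x] B[of x] by auto
    show "g x = (varfun g x + g x - (varfun g x - g x)) / 2" by simp
  qed
qed


lemma abs_integral_le:
  fixes h :: "'a \<Rightarrow> real"
  assumes "integrable M b" "\<And>x. \<bar>h x\<bar> \<le> b x"
  shows "\<bar>integral\<^sup>L M h\<bar> \<le> integral\<^sup>L M b"
proof -
  have "\<bar>integral\<^sup>L M h\<bar> \<le> integral\<^sup>L M (\<lambda>x. \<bar>h x\<bar>)" by (rule integral_abs_bound)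
  also have "\<dots> \<le> integral\<^sup>L M b"
    using assms by (intro integral_mono') (auto intro: order_trans[OF abs_ge_zero])
  finally show ?thesis .
qed

lemma cos_interval:
  fixes u a b :: real
  assumes "a \<le> b" "u \<noteq> 0"
  shows "(LINT x|lborel. indicator {a..b} x * cos (u * x)) = (sin (u * b) - sin (u * a)) / u"
proof -
  have "(LINT x|lborel. indicator {a..b} x *\<^sub>R cos (u * x)) = sin (u * b) / u - sin (u * a) / u"
  proof (rule integral_FTC_atLeastAtMost[OF assms(1)])
    fix x show "((\<lambda>x. sin (u * x) / u) has_vector_derivative cos (u * x)) (at x within {a..b})"
      using assms(2) by (auto intro!: derivative_eq_intros simp: has_real_derivative_iff_has_vector_derivative[symmetric])
  qed (intro continuous_intros)
  then show ?thesis by (simp add: diff_divide_distrib)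
qed

lemma cos_interval_bound:
  fixes u a b :: real
  assumes "a \<le> b" "u \<noteq> 0"
  shows "\<bar>LINT x|lborel. indicator {a..b} x * cos (u * x)\<bar> \<le> 2 / \<bar>u\<bar>"
proof -
  have "\<bar>sin (u * b) - sin (u * a)\<bar> \<le> 2"
    using abs_sin_le_one[of "u*b"] abs_sin_le_one[of "u*a"] by linarith
  then show ?thesis using cos_interval[OF assms] assms(2) by (simp add: abs_div divide_right_mono)
qed

lemma upset_bound:
  fixes \<psi> :: "real \<Rightarrow> real"
  assumes "mono \<psi>" "a \<le> b" "u \<noteq> 0"
  shows "\<bar>LINT x|lborel. indicator {a..b} x * indicator {x. y < \<psi> x} x * cos (u * x)\<bar> \<le> 2 / \<bar>u\<bar>"
proof (cases "{x\<in>{a..b}. y < \<psi> x} = {}")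
  case True
  then have zero: "indicator {a..b} x * indicator {x. y < \<psi> x} x * cos (u * x) = 0" for x
    by (auto simp: indicator_def)
  have "(LINT x|lborel. indicator {a..b} x * indicator {x. y < \<psi> x} x * cos (u * x)) = 0"
    by (simp only: zero integral_zero)
  then show ?thesis by simp
next
  case False
  define A where "A = {x\<in>{a..b}. y < \<psi> x}"
  define c where "c = Inf A"
  have Ane: "A \<noteq> {}" using False A_def by simp
  have bddA: "bdd_below A" unfolding A_def by (rule bdd_belowI[of _ a]) auto
  have cle: "c \<le> z" if "z \<in> A" for z unfolding c_def using that bddA by (rule cInf_lower)
  have ac: "a \<le> c" unfolding c_def using Ane by (intro cInf_greatest) (auto simp: A_def)
  obtain z0 where "z0 \<in> A" using Ane by blast
  then have cb: "c \<le> b" using cle[of z0] by (auto simp: A_def)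
  have in_A: "x \<in> A" if cx: "c < x" "x \<le> b" for x
  proof -
    obtain z where z: "z \<in> A" "z < x" using cInf_lessD[OF Ane, of x] cx unfolding c_def by blast
    then have "\<psi> z \<le> \<psi> x" using assms(1) by (simp add: mono_def)
    then show ?thesis using z that unfolding A_def by auto
  qed
  have notin: "x \<notin> A" if "x < c" for x using cle[of x] that by auto
  have "AE x in lborel. indicator {a..b} x * indicator {x. y < \<psi> x} x * cos (u * x) = indicator {c..b} x * cos (u * x)"
    using AE_lborel_singleton[of c]
  proof eventually_elim
    case (elim x)
    then consider "x < c" | "c < x" by linarith
    then show ?case
    proof cases
      case 1 then show ?thesis using notin[OF 1] by (auto simp: A_def indicator_def)
    next
      case 2 then show ?thesis using in_A[OF 2] ac by (auto simp: A_def indicator_def)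
    qed
  qed
  then have "(LINT x|lborel. indicator {a..b} x * indicator {x. y < \<psi> x} x * cos (u * x)) = (LINT x|lborel. indicator {c..b} x * cos (u * x))"
  proof (rule integral_cong_AE[rotated 2])
    have [measurable]: "\<psi> \<in> borel_measurable borel" using borel_measurable_mono assms(1) by blast
    show "(\<lambda>x. indicator {a..b} x * indicator {x. y < \<psi> x} x * cos (u * x)) \<in> borel_measurable lborel" by measurable
    show "(\<lambda>x. indicator {c..b} x * cos (u * x)) \<in> borel_measurable lborel" by measurable
  qed
  then show ?thesis using cos_interval_bound[OF cb assms(3)] by simp
qed

lemma integrable_bounded_Icc:
  fixes h :: "real \<Rightarrow> real"
  assumes "h \<in> borel_measurable borel" "\<And>x. x \<in> {a..b} \<Longrightarrow> \<bar>h x\<bar> \<le> K"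
  shows "integrable lborel (\<lambda>x. indicator {a..b} x * h x)"
  by (rule integrableI_bounded_set[where A="{a..b}" and B=K]) (use assms in \<open>auto simp: indicator_def emeasure_lborel_Icc_eq\<close>)

lemma mono_cos_bound:
  fixes \<phi> :: "real \<Rightarrow> real"
  assumes mono: "mono \<phi>" and ab: "a \<le> b" and u: "u \<noteq> 0"
  shows "\<bar>LINT x|lborel. indicator {a..b} x * \<phi> x * cos (u * x)\<bar> \<le> (\<bar>\<phi> a\<bar> + (\<phi> b - \<phi> a)) * (2 / \<bar>u\<bar>)"
proof -
  have [measurable]: "\<phi> \<in> borel_measurable borel" using borel_measurable_mono mono by blast
  define \<psi> where "\<psi> x = \<phi> x - \<phi> a" for x
  define Bp where "Bp = \<phi> b - \<phi> a"
  have [measurable]: "\<psi> \<in> borel_measurable borel" unfolding \<psi>_def by measurable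
  have mono\<psi>: "mono \<psi>" using mono unfolding \<psi>_def mono_def by auto
  have \<psi>rng: "0 \<le> \<psi> x \<and> \<psi> x \<le> Bp" if "x \<in> {a..b}" for x
    using that mono unfolding \<psi>_def Bp_def mono_def by auto
  have Bp0: "0 \<le> Bp" using \<psi>rng[of a] ab by auto
  have int1: "integrable lborel (\<lambda>x. indicator {a..b} x * cos (u * x))"
    by (rule integrable_bounded_Icc[where K=1]) auto
  have int2: "integrable lborel (\<lambda>x. indicator {a..b} x * (\<psi> x * cos (u * x)))"
  proof (rule integrable_bounded_Icc[where K=Bp])
    fix x assume "x \<in> {a..b}"
    then show "\<bar>\<psi> x * cos (u * x)\<bar> \<le> Bp" using \<psi>rng[of x] abs_cos_le_one[of "u*x"]
      by (simp add: abs_mult) (meson abs_cos_le_one mult_left_le order_trans)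
  qed measurable
  have split: "(LINT x|lborel. indicator {a..b} x * \<phi> x * cos (u * x)) =
      \<phi> a * (LINT x|lborel. indicator {a..b} x * cos (u * x)) + (LINT x|lborel. indicator {a..b} x * (\<psi> x * cos (u * x)))"
  proof -
    have "(LINT x|lborel. indicator {a..b} x * \<phi> x * cos (u * x)) =
      (LINT x|lborel. \<phi> a * (indicator {a..b} x * cos (u * x)) + indicator {a..b} x * (\<psi> x * cos (u * x)))"
      by (rule Bochner_Integration.integral_cong) (auto simp: \<psi>_def algebra_simps)
    also have "\<dots> = \<phi> a * (LINT x|lborel. indicator {a..b} x * cos (u * x)) + (LINT x|lborel. indicator {a..b} x * (\<psi> x * cos (u * x)))"
      using int1 int2 by simp
    finally show ?thesis .
  qed
  define F where "F x y = indicator {a..b} x * indicator {0..Bp} y * indicator {y. y < \<psi> x} y * cos (u * x)" for x y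
  have inner_y: "(LINT y|lborel. F x y) = indicator {a..b} x * (\<psi> x * cos (u * x))" for x
  proof (cases "x \<in> {a..b}")
    case True
    have "indicator {0..Bp} y * indicator {y. y < \<psi> x} y = (indicator {0..<\<psi> x} y :: real)" for y
      using \<psi>rng[OF True] by (auto simp: indicator_def)
    then have "(LINT y|lborel. indicator {0..Bp} y * indicator {y. y < \<psi> x} y) = \<psi> x"
      using \<psi>rng[OF True] by simp
    moreover have "(LINT y|lborel. F x y) = (LINT y|lborel. indicator {0..Bp} y * indicator {y. y < \<psi> x} y) * cos (u * x)"
      unfolding F_def using True by simp
    ultimately show ?thesis using True by simp
  next
    case False then show ?thesis by (simp add: F_def)
  qed
  have intF: "integrable (lborel \<Otimes>\<^sub>M lborel) (case_prod F)"
  proof (rule integrableI_bounded_set[where A="{a..b} \<times> {0..Bp}" and B=1])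
    show "case_prod F \<in> borel_measurable (lborel \<Otimes>\<^sub>M lborel)" unfolding F_def by measurable
    show "emeasure (lborel \<Otimes>\<^sub>M lborel) ({a..b} \<times> {0..Bp}) < \<infinity>"
      by (subst lborel.emeasure_pair_measure_Times) (auto simp: ennreal_mult_less_top emeasure_lborel_Icc_eq)
    show "AE x in lborel \<Otimes>\<^sub>M lborel. x \<in> {a..b} \<times> {0..Bp} \<longrightarrow> norm (case_prod F x) \<le> 1"
      by (rule AE_I2) (auto simp: F_def indicator_def abs_mult)
    show "AE x in lborel \<Otimes>\<^sub>M lborel. x \<notin> {a..b} \<times> {0..Bp} \<longrightarrow> case_prod F x = 0"
      by (rule AE_I2) (auto simp: F_def indicator_def)
  qed simp
  have "(LINT x|lborel. indicator {a..b} x * (\<psi> x * cos (u * x))) = (LINT x|lborel. LINT y|lborel. F x y)"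
    using inner_y by simp
  also have "\<dots> = (LINT y|lborel. LINT x|lborel. F x y)"
    using lborel_pair.Fubini_integral[OF intF] by simp
  also have "\<dots> = (LINT y|lborel. indicator {0..Bp} y * (LINT x|lborel. indicator {a..b} x * indicator {x. y < \<psi> x} x * cos (u * x)))"
    unfolding F_def by (intro Bochner_Integration.integral_cong refl) (auto simp: indicator_def)
  finally have eq2: "(LINT x|lborel. indicator {a..b} x * (\<psi> x * cos (u * x))) = \<dots>" .
  have bnd2: "\<bar>LINT x|lborel. indicator {a..b} x * (\<psi> x * cos (u * x))\<bar> \<le> Bp * (2 / \<bar>u\<bar>)"
  proof -
    have "\<bar>LINT y|lborel. indicator {0..Bp} y * (LINT x|lborel. indicator {a..b} x * indicator {x. y < \<psi> x} x * cos (u * x))\<bar>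
        \<le> (LINT y|lborel. indicator {0..Bp} y * (2 / \<bar>u\<bar>))"
    proof (rule abs_integral_le)
      show "integrable lborel (\<lambda>y. indicator {0..Bp} y * (2 / \<bar>u\<bar>))"
        by (rule integrable_bounded_Icc[where K="2/\<bar>u\<bar>"]) auto
      fix y
      show "\<bar>indicator {0..Bp} y * (LINT x|lborel. indicator {a..b} x * indicator {x. y < \<psi> x} x * cos (u * x))\<bar>
          \<le> indicator {0..Bp} y * (2 / \<bar>u\<bar>)"
        using upset_bound[OF mono\<psi> ab u, of y] by (auto simp: indicator_def)
    qed
    also have "\<dots> = Bp * (2 / \<bar>u\<bar>)" using Bp0 by simp
    finally show ?thesis using eq2 by simp
  qed
  have bnd1: "\<bar>\<phi> a * (LINT x|lborel. indicator {a..b} x * cos (u * x))\<bar> \<le> \<bar>\<phi> a\<bar> * (2 / \<bar>u\<bar>)"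
    unfolding abs_mult by (rule mult_left_mono[OF cos_interval_bound[OF ab u]]) simp
  have "(\<bar>\<phi> a\<bar> + (\<phi> b - \<phi> a)) * (2 / \<bar>u\<bar>) = \<bar>\<phi> a\<bar> * (2 / \<bar>u\<bar>) + Bp * (2 / \<bar>u\<bar>)"
    unfolding Bp_def by (simp only: distrib_right)
  then show ?thesis unfolding split using bnd1 bnd2 abs_triangle_ineq
    by (smt (verit))
qed


lemma BV0_borel:
  assumes "BV0 g" shows "g \<in> borel_measurable borel"
proof -
  obtain \<phi>1 \<phi>2 B where d: "mono \<phi>1" "mono \<phi>2" "\<forall>x. g x = (\<phi>1 x - \<phi>2 x) / 2"
    using BV0_decomp[OF assms] by blast
  have [measurable]: "\<phi>1 \<in> borel_measurable borel" "\<phi>2 \<in> borel_measurable borel"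
    using borel_measurable_mono d by blast+
  have "g = (\<lambda>x. (\<phi>1 x - \<phi>2 x) / 2)" using d by auto
  then show ?thesis by simp
qed

lemma g_cos_bound:
  assumes "BV0 g"
  shows "\<exists>C\<ge>0. \<forall>R u. u \<noteq> 0 \<longrightarrow> \<bar>LINT x|lborel. indicator {-R..R} x * g x * cos (u * x)\<bar> \<le> C / \<bar>u\<bar>"
proof -
  obtain \<phi>1 \<phi>2 B where m: "mono \<phi>1" "mono \<phi>2" and bd: "\<And>x. \<bar>\<phi>1 x\<bar> \<le> B \<and> \<bar>\<phi>2 x\<bar> \<le> B"
    and d: "\<And>x. g x = (\<phi>1 x - \<phi>2 x) / 2"
    using BV0_decomp[OF assms] by blast
  have [measurable]: "\<phi>1 \<in> borel_measurable borel" "\<phi>2 \<in> borel_measurable borel"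
    using borel_measurable_mono m by blast+
  have B0: "0 \<le> B" using bd[of 0] by linarith
  have "\<bar>LINT x|lborel. indicator {-R..R} x * g x * cos (u * x)\<bar> \<le> (6 * B) / \<bar>u\<bar>" if u: "u \<noteq> 0" for R u
  proof (cases "-R \<le> R")
    case False
    then have "{-R..R} = {}" by auto
    then show ?thesis using B0 by simp
  next
    case True
    have i1: "integrable lborel (\<lambda>x. indicator {-R..R} x * (\<phi>1 x * cos (u * x)))"
      by (rule integrable_bounded_Icc[where K=B]) (use bd in \<open>auto simp: abs_mult intro: mult_le_one order_trans[OF mult_left_le]\<close>)
    have i2: "integrable lborel (\<lambda>x. indicator {-R..R} x * (\<phi>2 x * cos (u * x)))"
      by (rule integrable_bounded_Icc[where K=B]) (use bd in \<open>auto simp: abs_mult intro: mult_le_one order_trans[OF mult_left_le]\<close>)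
    have eq: "(LINT x|lborel. indicator {-R..R} x * g x * cos (u * x)) =
        ((LINT x|lborel. indicator {-R..R} x * \<phi>1 x * cos (u * x)) - (LINT x|lborel. indicator {-R..R} x * \<phi>2 x * cos (u * x))) / 2"
    proof -
      have "(LINT x|lborel. indicator {-R..R} x * g x * cos (u * x)) =
          (LINT x|lborel. (indicator {-R..R} x * (\<phi>1 x * cos (u * x)) - indicator {-R..R} x * (\<phi>2 x * cos (u * x))) / 2)"
        by (rule Bochner_Integration.integral_cong) (auto simp: d algebra_simps)
      also have "\<dots> = ((LINT x|lborel. indicator {-R..R} x * (\<phi>1 x * cos (u * x))) - (LINT x|lborel. indicator {-R..R} x * (\<phi>2 x * cos (u * x)))) / 2"
        using i1 i2 by simp
      finally show ?thesis by (simp add: mult.assoc)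
    qed
    have b1: "\<bar>LINT x|lborel. indicator {-R..R} x * \<phi>1 x * cos (u * x)\<bar> \<le> (3 * B) * (2 / \<bar>u\<bar>)"
    proof -
      have "(\<bar>\<phi>1 (-R)\<bar> + (\<phi>1 R - \<phi>1 (-R))) \<le> 3 * B" using bd[of R] bd[of "-R"] by linarith
      then show ?thesis using mono_cos_bound[OF m(1) True u] u
        by (smt (verit, best) divide_nonneg_nonneg mult_right_mono zero_le_divide_iff abs_ge_zero)
    qed
    have b2: "\<bar>LINT x|lborel. indicator {-R..R} x * \<phi>2 x * cos (u * x)\<bar> \<le> (3 * B) * (2 / \<bar>u\<bar>)"
    proof -
      have "(\<bar>\<phi>2 (-R)\<bar> + (\<phi>2 R - \<phi>2 (-R))) \<le> 3 * B" using bd[of R] bd[of "-R"] by linarith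
      then show ?thesis using mono_cos_bound[OF m(2) True u] u
        by (smt (verit, best) divide_nonneg_nonneg mult_right_mono zero_le_divide_iff abs_ge_zero)
    qed
    have "(3 * B) * (2 / \<bar>u\<bar>) = 6 * B / \<bar>u\<bar>" by simp
    moreover have "\<bar>(x - y) / 2\<bar> \<le> K" if "\<bar>x\<bar> \<le> K" "\<bar>y\<bar> \<le> K" for x y K :: real
      using that by (auto simp: abs_le_iff)
    ultimately show ?thesis unfolding eq using b1 b2 by metis
  qed
  then show ?thesis using B0 by (intro exI[of _ "6*B"]) auto
qed


lemma sin_diff_integral:
  fixes x s1 s2 :: real
  assumes "s1 \<le> s2"
  shows "sin (s2 * x) - sin (s1 * x) = (LINT u|lborel. indicator {s1..s2} u * (x * cos (u * x)))"
proof -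
  have "(LINT u|lborel. indicator {s1..s2} u *\<^sub>R (x * cos (u * x))) = sin (s2 * x) - sin (s1 * x)"
  proof (rule integral_FTC_atLeastAtMost[OF assms])
    fix u show "((\<lambda>u. sin (u * x)) has_vector_derivative (x * cos (u * x))) (at u within {s1..s2})"
      by (auto intro!: derivative_eq_intros simp: has_real_derivative_iff_has_vector_derivative[symmetric])
  qed (intro continuous_intros)
  then show ?thesis by simp
qed

lemma diff_formula:
  fixes g :: "real \<Rightarrow> real"
  assumes [measurable]: "g \<in> borel_measurable borel" and bg: "\<And>x. \<bar>g x\<bar> \<le> Bg" and s: "s1 \<le> s2" and g0: "g 0 = 0"
  shows "(LINT x|lborel. indicator {-R..R} x * ((g x / x) * (sin (s2 * x) - sin (s1 * x)))) =
    (LINT u|lborel. indicator {s1..s2} u * (LINT x|lborel. indicator {-R..R} x * g x * cos (u * x)))"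
proof -
  define G where "G x u = indicator {-R..R} x * indicator {s1..s2} u * g x * cos (u * x)" for x u
  have gx: "g x / x * x = g x" for x using g0 by (cases "x = 0") auto
  have "indicator {-R..R} x * ((g x / x) * (sin (s2 * x) - sin (s1 * x))) = (LINT u|lborel. G x u)" for x
  proof -
    have "indicator {-R..R} x * ((g x / x) * (sin (s2 * x) - sin (s1 * x))) =
        (indicator {-R..R} x * (g x / x)) * (LINT u|lborel. indicator {s1..s2} u * (x * cos (u * x)))"
      using sin_diff_integral[OF s, of x] by simp
    also have "\<dots> = (LINT u|lborel. (indicator {-R..R} x * (g x / x)) * (indicator {s1..s2} u * (x * cos (u * x))))"
      by (simp only: integral_mult_right_zero)
    also have "\<dots> = (LINT u|lborel. G x u)"
    proof (rule Bochner_Integration.integral_cong[OF refl])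
      fix u
      have "indicator {-R..R} x * (g x / x) * (indicator {s1..s2} u * (x * cos (u * x))) =
          indicator {-R..R} x * indicator {s1..s2} u * (g x / x * x) * cos (u * x)"
        by (simp only: ac_simps)
      then show "indicator {-R..R} x * (g x / x) * (indicator {s1..s2} u * (x * cos (u * x))) = G x u"
        unfolding G_def gx .
    qed
    finally show ?thesis .
  qed
  then have "(LINT x|lborel. indicator {-R..R} x * ((g x / x) * (sin (s2 * x) - sin (s1 * x)))) =
      (LINT x|lborel. LINT u|lborel. G x u)" by simp
  also have "\<dots> = (LINT u|lborel. LINT x|lborel. G x u)"
  proof (rule lborel_pair.Fubini_integral[symmetric])
    show "integrable (lborel \<Otimes>\<^sub>M lborel) (case_prod G)"
    proof (rule integrableI_bounded_set[where A="{-R..R} \<times> {s1..s2}" and B=Bg])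
      show "case_prod G \<in> borel_measurable (lborel \<Otimes>\<^sub>M lborel)" unfolding G_def by measurable
      show "emeasure (lborel \<Otimes>\<^sub>M lborel) ({-R..R} \<times> {s1..s2}) < \<infinity>"
        by (subst lborel.emeasure_pair_measure_Times) (auto simp: ennreal_mult_less_top emeasure_lborel_Icc_eq)
      show "AE x in lborel \<Otimes>\<^sub>M lborel. x \<in> {-R..R} \<times> {s1..s2} \<longrightarrow> norm (case_prod G x) \<le> Bg"
      proof -
        have "norm (G a b) \<le> Bg" for a b
        proof -
          have "\<bar>g a\<bar> * \<bar>cos (b * a)\<bar> \<le> Bg"
            using bg[of a] abs_cos_le_one[of "b*a"] by (meson abs_ge_zero mult_left_le order_trans)
          then show ?thesis using bg[of 0] by (auto simp: G_def indicator_def abs_mult)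
        qed
        then show ?thesis by (intro AE_I2) auto
      qed
      show "AE x in lborel \<Otimes>\<^sub>M lborel. x \<notin> {-R..R} \<times> {s1..s2} \<longrightarrow> case_prod G x = 0"
        by (rule AE_I2) (auto simp: G_def indicator_def)
    qed simp
  qed
  also have "\<dots> = (LINT u|lborel. indicator {s1..s2} u * (LINT x|lborel. indicator {-R..R} x * g x * cos (u * x)))"
  proof (rule Bochner_Integration.integral_cong[OF refl])
    fix u
    have "(LINT x|lborel. G x u) = (LINT x|lborel. indicator {s1..s2} u * (indicator {-R..R} x * g x * cos (u * x)))"
      unfolding G_def by (rule Bochner_Integration.integral_cong) (auto simp: algebra_simps)
    then show "(LINT x|lborel. G x u) = indicator {s1..s2} u * (LINT x|lborel. indicator {-R..R} x * g x * cos (u * x))"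
      by simp
  qed
  finally show ?thesis .
qed


lemma osc_le_lip:
  fixes F :: "real \<Rightarrow> real"
  assumes cd: "c \<le> d" and lip: "\<And>x y. x \<in> {c..d} \<Longrightarrow> y \<in> {c..d} \<Longrightarrow> F x - F y \<le> K"
  shows "osc F c d \<le> K"
proof -
  have ne: "{c..d} \<noteq> {}" using cd by auto
  have "(SUP x\<in>{c..d}. F x) \<le> (INF y\<in>{c..d}. F y) + K"
  proof -
    have "(SUP x\<in>{c..d}. F x) \<le> F y + K" if y: "y \<in> {c..d}" for y
    proof -
      have "F x \<le> F y + K" if "x \<in> {c..d}" for x using lip[OF that y] by linarith
      then show ?thesis using ne by (intro cSUP_least) auto
    qed
    then have "(SUP x\<in>{c..d}. F x) - K \<le> (INF y\<in>{c..d}. F y)"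
      using ne by (intro cINF_greatest) (auto simp: algebra_simps)
    then show ?thesis by simp
  qed
  then show ?thesis unfolding osc_def by simp
qed

lemma ACG_from_lip:
  fixes F :: "real \<Rightarrow> real"
  assumes cont: "continuous_on UNIV F"
    and lip: "\<And>\<delta>. \<delta> > 0 \<Longrightarrow> \<exists>L>0. \<forall>s1 s2. s1 \<le> s2 \<longrightarrow> (\<forall>u\<in>{s1..s2}. \<delta> \<le> \<bar>u\<bar>) \<longrightarrow> \<bar>F s2 - F s1\<bar> \<le> L * (s2 - s1)"
  shows "ACG_star F"
  unfolding ACG_star_def
proof (intro conjI cont exI[of _ "\<lambda>n. insert 0 {s. 1 / (real n + 1) \<le> \<bar>s\<bar>}"] allI)
  show "(\<Union>n. insert 0 {s. 1 / (real n + 1) \<le> \<bar>s\<bar>}) = UNIV"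
  proof (rule set_eqI, rule iffI[OF UNIV_I])
    fix s :: real
    show "s \<in> (\<Union>n. insert 0 {s. 1 / (real n + 1) \<le> \<bar>s\<bar>})"
    proof (cases "s = 0")
      case False
      then have "\<bar>s\<bar> > 0" by simp
      then obtain n :: nat where n: "inverse (real (Suc n)) < \<bar>s\<bar>"
        using reals_Archimedean by blast
      have "1 / (real n + 1) \<le> \<bar>s\<bar>" using n by (simp add: inverse_eq_divide add.commute)
      then have "s \<in> insert 0 {s. 1 / (real n + 1) \<le> \<bar>s\<bar>}" by simp
      then show ?thesis by (rule UN_I[OF UNIV_I])
    next
      case True
      then have "s \<in> insert 0 {s. 1 / (real 0 + 1) \<le> \<bar>s\<bar>}" by simp
      then show ?thesis by (rule UN_I[OF UNIV_I])
    qed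
  qed
  fix n :: nat
  define \<delta> where "\<delta> = 1 / (real n + 1)"
  have \<delta>0: "\<delta> > 0" unfolding \<delta>_def by simp
  let ?E = "insert 0 {s. 1 / (real n + 1) \<le> \<bar>s\<bar>}"
  show "AC_star_on F ?E"
    unfolding AC_star_on_def
  proof (intro allI impI)
    fix \<epsilon> :: real assume \<epsilon>: "\<epsilon> > 0"
    obtain L where L0: "L > 0" and L: "\<And>s1 s2. s1 \<le> s2 \<Longrightarrow> (\<forall>u\<in>{s1..s2}. \<delta> \<le> \<bar>u\<bar>) \<Longrightarrow> \<bar>F s2 - F s1\<bar> \<le> L * (s2 - s1)"
      using lip[OF \<delta>0] by blast
    define \<eta> where "\<eta> = min \<delta> (\<epsilon> / L)"
    have \<eta>0: "\<eta> > 0" unfolding \<eta>_def using \<delta>0 \<epsilon> L0 by simp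
    show "\<exists>\<eta>>0. \<forall>(m::nat) (c::nat\<Rightarrow>real) (d::nat\<Rightarrow>real). (\<forall>k<m. c k \<in> ?E \<and> d k \<in> ?E \<and> c k \<le> d k) \<and>
            (\<forall>i<m. \<forall>j<m. i \<noteq> j \<longrightarrow> d i \<le> c j \<or> d j \<le> c i) \<and> (\<Sum>k<m. d k - c k) < \<eta> \<longrightarrow>
            (\<Sum>k<m. osc F (c k) (d k)) < \<epsilon>"
    proof (intro exI[of _ \<eta>] conjI \<eta>0 allI impI)
      fix m :: nat and c d :: "nat \<Rightarrow> real"
      assume H: "(\<forall>k<m. c k \<in> ?E \<and> d k \<in> ?E \<and> c k \<le> d k) \<and>
            (\<forall>i<m. \<forall>j<m. i \<noteq> j \<longrightarrow> d i \<le> c j \<or> d j \<le> c i) \<and> (\<Sum>k<m. d k - c k) < \<eta>"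
      have H1: "\<forall>k<m. c k \<in> ?E \<and> d k \<in> ?E \<and> c k \<le> d k" and H3: "(\<Sum>k<m. d k - c k) < \<eta>"
        using H by blast+
      have each: "osc F (c k) (d k) \<le> L * (d k - c k)" if k: "k < m" for k
      proof -
        have ck: "c k \<in> ?E" "d k \<in> ?E" "c k \<le> d k" using H1 k by blast+
        have "d k - c k \<le> (\<Sum>k<m. d k - c k)"
        proof (rule member_le_sum)
          show "k \<in> {..<m}" using k by simp
          show "0 \<le> d x - c x" if "x \<in> {..<m} - {k}" for x using H1 that by auto
        qed simp
        then have small: "d k - c k < \<delta>" using H3 \<eta>_def by linarith
        show ?thesis
        proof (cases "c k = d k")
          case True
          then show ?thesis by (simp add: osc_def)
        next
          case False
          have cdi: "\<forall>u\<in>{c k..d k}. \<delta> \<le> \<bar>u\<bar>"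
          proof -
            have "c k \<noteq> 0" using ck small False \<delta>_def by auto
            moreover have "d k \<noteq> 0" using ck small False \<delta>_def by auto
            ultimately have a: "\<delta> \<le> \<bar>c k\<bar>" "\<delta> \<le> \<bar>d k\<bar>" using ck \<delta>_def by auto
            then have "\<delta> \<le> c k \<or> d k \<le> - \<delta>" using small ck(3) \<delta>0 by linarith
            then show ?thesis by auto
          qed
          show ?thesis
          proof (rule osc_le_lip[OF ck(3)])
            fix x y assume xy: "x \<in> {c k..d k}" "y \<in> {c k..d k}"
            show "F x - F y \<le> L * (d k - c k)"
            proof (cases "x \<le> y")
              case True
              have "\<bar>F y - F x\<bar> \<le> L * (y - x)" using L[OF True] cdi xy by auto
              moreover have "L * (y - x) \<le> L * (d k - c k)" using L0 xy by (intro mult_left_mono) auto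
              ultimately show ?thesis by linarith
            next
              case False
              have "\<bar>F x - F y\<bar> \<le> L * (x - y)" using L[of y x] False cdi xy by auto
              moreover have "L * (x - y) \<le> L * (d k - c k)" using L0 xy by (intro mult_left_mono) auto
              ultimately show ?thesis by linarith
            qed
          qed
        qed
      qed
      have "(\<Sum>k<m. osc F (c k) (d k)) \<le> (\<Sum>k<m. L * (d k - c k))"
        by (rule sum_mono) (use each in auto)
      also have "\<dots> = L * (\<Sum>k<m. d k - c k)" by (simp add: sum_distrib_left)
      also have "\<dots> < L * \<eta>" using H3 L0 by simp
      also have "\<dots> \<le> \<epsilon>" unfolding \<eta>_def using L0 by (simp add: min_def field_simps)
      finally show "(\<Sum>k<m. osc F (c k) (d k)) < \<epsilon>" .
    qed
  qed
qed


lemma cis_meas[measurable]: "(\<lambda>x::real. cis (a * x)) \<in> borel_measurable borel"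
  by (intro borel_measurable_continuous_onI continuous_intros)

lemma F1_integrable:
  assumes "integrable lebesgue h"
  shows "integrable lebesgue (\<lambda>x. cis (- s * x) * complex_of_real (h x))"
proof (rule Bochner_Integration.integrable_bound[where f="\<lambda>x. h x"])
  show "integrable lebesgue (\<lambda>x. h x)" using assms .
  have [measurable]: "h \<in> borel_measurable lebesgue" using assms by auto
  have "(\<lambda>x::real. cis (- s * x)) \<in> borel_measurable lebesgue"
    using cis_meas[of "-s"] measurable_lborel2 by (metis measurable_completion sets_lborel measurable_cong_sets)
  then show "(\<lambda>x. cis (- s * x) * complex_of_real (h x)) \<in> borel_measurable lebesgue" by measurable
  show "AE x in lebesgue. norm (cis (- s * x) * complex_of_real (h x)) \<le> norm (h x)"
    by (simp add: norm_mult)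
qed

lemma F1_cont:
  assumes "integrable lebesgue h"
  shows "continuous_on UNIV (fourier1 h)"
proof -
  have [measurable]: "h \<in> borel_measurable lebesgue" using assms by auto
  have cm: "(\<lambda>x::real. cis (a * x)) \<in> borel_measurable lebesgue" for a
    using cis_meas[of a] by (metis measurable_completion sets_lborel measurable_cong_sets measurable_lborel2)
  have "continuous_on UNIV (\<lambda>s. LINT x|lebesgue. cis (- s * x) * complex_of_real (h x))"
  proof (rule continuous_on_sequentiallyI)
    fix u :: "nat \<Rightarrow> real" and a assume u: "u \<longlonglongrightarrow> a"
    show "(\<lambda>n. LINT x|lebesgue. cis (- u n * x) * complex_of_real (h x)) \<longlonglongrightarrow> (LINT x|lebesgue. cis (- a * x) * complex_of_real (h x))"
    proof (rule integral_dominated_convergence[where w="\<lambda>x. norm (h x)"])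
      show "(\<lambda>x. cis (- a * x) * complex_of_real (h x)) \<in> borel_measurable lebesgue"
        using cm[of "-a"] by measurable
      show "(\<lambda>x. cis (- u n * x) * complex_of_real (h x)) \<in> borel_measurable lebesgue" for n
        using cm[of "- u n"] by measurable
      show "integrable lebesgue (\<lambda>x. norm (h x))" using assms by auto
      show "AE x in lebesgue. (\<lambda>n. cis (- u n * x) * complex_of_real (h x)) \<longlonglongrightarrow> cis (- a * x) * complex_of_real (h x)"
        using u by (intro AE_I2 tendsto_intros continuous_on_tendsto_compose[OF continuous_on_cis]) auto
      show "AE x in lebesgue. norm (cis (- u n * x) * complex_of_real (h x)) \<le> norm (h x)" for n
        by (simp add: norm_mult)
    qed
  qed
  then show ?thesis unfolding fourier1_def[abs_def] by (intro continuous_intros) auto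
qed

lemma F1_sin:
  assumes "integrable lebesgue h"
  shows "- Im (fourier1 h s) = (LINT x|lebesgue. h x * sin (s * x)) / sqrt (2 * pi)"
proof -
  have "Im (LINT x|lebesgue. cis (- s * x) * complex_of_real (h x)) = (LINT x|lebesgue. Im (cis (- s * x) * complex_of_real (h x)))"
    by (rule integral_bounded_linear[OF bounded_linear_Im F1_integrable[OF assms], symmetric])
  also have "\<dots> = (LINT x|lebesgue. - (h x * sin (s * x)))"
    by (rule Bochner_Integration.integral_cong) (auto simp: cis.sel)
  finally show ?thesis unfolding fourier1_def by (simp add: Im_divide_of_real)
qed


lemma pow_bound_far:
  fixes a x p :: real
  assumes p: "1 \<le> p" "p \<le> 2" and x: "1 < \<bar>x\<bar>" and a: "0 \<le> a"
  shows "a / \<bar>x\<bar> \<le> a powr p + 2 * inverse (1 + x\<^sup>2)"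
proof -
  have x2: "1 < x\<^sup>2" using x by (metis abs_le_square_iff less_le_not_le not_less power_one abs_one one_less_power pos2 abs_ge_zero zero_less_abs_iff abs_not_less_zero one_power2)
  have inv: "inverse (x\<^sup>2) \<le> 2 * inverse (1 + x\<^sup>2)"
  proof -
    have "0 < x\<^sup>2" using x2 by linarith
    then show ?thesis using x2 by (simp add: field_simps)
  qed
  have pos: "0 \<le> a powr p" "0 \<le> 2 * inverse (1 + x\<^sup>2)" by (auto simp: add_pos_nonneg)
  show ?thesis
  proof (cases "a \<le> inverse \<bar>x\<bar>")
    case True
    then have "a / \<bar>x\<bar> \<le> inverse \<bar>x\<bar> / \<bar>x\<bar>" using x by (intro divide_right_mono) auto
    also have "\<dots> = inverse (x\<^sup>2)" by (simp add: power2_eq_square field_simps)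
    finally show ?thesis using inv pos by linarith
  next
    case False
    then have ax: "inverse \<bar>x\<bar> < a" by simp
    then have apos: "0 < a" using x by (meson inverse_positive_iff_positive less_trans zero_less_abs_iff zero_less_one less_le_trans abs_ge_zero not_less)
    have "inverse \<bar>x\<bar> \<le> a powr (p - 1)"
    proof (cases "1 \<le> a")
      case True
      then have "1 \<le> a powr (p - 1)" using p by (intro ge_one_powr_ge_zero) auto
      moreover have "inverse \<bar>x\<bar> \<le> 1" using x by (simp add: inverse_le_1_iff)
      ultimately show ?thesis by linarith
    next
      case False
      then have "a powr 1 \<le> a powr (p - 1)" using p apos by (intro powr_mono') auto
      then show ?thesis using ax apos by simp
    qed
    then have "a * inverse \<bar>x\<bar> \<le> a * a powr (p - 1)" using apos by (intro mult_left_mono) auto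
    also have "a * a powr (p - 1) = a powr p" using apos by (simp add: powr_diff field_simps powr_one)
    finally have "a * inverse \<bar>x\<bar> \<le> a powr p" .
    moreover have "a / \<bar>x\<bar> = a * inverse \<bar>x\<bar>" by (simp add: divide_inverse)
    ultimately show ?thesis using pos(2) by linarith
  qed
qed

lemma pow_bound_near:
  fixes a x p :: real
  assumes p: "1 \<le> p" and x: "\<bar>x\<bar> \<le> 1" and a: "0 \<le> a"
  shows "a \<le> a powr p + 2 * inverse (1 + x\<^sup>2)"
proof -
  have "x\<^sup>2 \<le> 1" using x by (simp add: abs_square_le_1)
  then have i: "1 \<le> 2 * inverse (1 + x\<^sup>2)"
  proof -
    have "0 < 1 + x\<^sup>2" by (simp add: add_pos_nonneg)
    then show ?thesis using \<open>x\<^sup>2 \<le> 1\<close> by (simp add: field_simps)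
  qed
  show ?thesis
  proof (cases "a \<le> 1")
    case True then show ?thesis using i by (smt (verit) powr_ge_zero)
  next
    case False
    then have "a powr 1 \<le> a powr p" using p by (intro powr_mono) auto
    then show ?thesis using False i by simp
  qed
qed


lemma inv_sq_integrable: "integrable lebesgue (\<lambda>x::real. inverse (1 + x\<^sup>2))"
proof -
  have "integrable lborel (\<lambda>x::real. inverse (1 + x\<^sup>2))"
    using integrable_inverse_1_plus_square unfolding set_integrable_def by (simp add: einterval_def)
  then show ?thesis by (subst integrable_completion) auto
qed

lemma f_integrable:
  fixes f :: "real \<Rightarrow> real"
  assumes p: "1 \<le> p" "p \<le> 2" and f: "Lp_real p f" and g: "Lp_real p (\<lambda>t. t * f t)"
  shows "integrable lebesgue f"
proof (rule Bochner_Integration.integrable_bound)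
  define b where "b x = \<bar>f x\<bar> powr p + \<bar>x * f x\<bar> powr p + 2 * inverse (1 + x\<^sup>2)" for x
  show "integrable lebesgue b"
    unfolding b_def using f g inv_sq_integrable unfolding Lp_real_def by auto
  show "f \<in> borel_measurable lebesgue" using f unfolding Lp_real_def by auto
  have "norm (f x) \<le> norm (b x)" for x
  proof -
    have nn: "0 \<le> \<bar>f x\<bar> powr p" "0 \<le> \<bar>x * f x\<bar> powr p" "0 \<le> 2 * inverse (1 + x\<^sup>2)"
      by (auto simp: add_pos_nonneg)
    have "\<bar>f x\<bar> \<le> b x"
    proof (cases "\<bar>x\<bar> \<le> 1")
      case True
      then show ?thesis using pow_bound_near[OF p(1) True, of "\<bar>f x\<bar>"] nn unfolding b_def by linarith
    next
      case False
      then have x1: "1 < \<bar>x\<bar>" by simp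
      have "\<bar>f x\<bar> = \<bar>x * f x\<bar> / \<bar>x\<bar>" using x1 by (simp add: abs_mult)
      then show ?thesis using pow_bound_far[OF p x1, of "\<bar>x * f x\<bar>"] nn unfolding b_def by linarith
    qed
    then show ?thesis using nn unfolding b_def by simp
  qed
  then show "AE x in lebesgue. norm (f x) \<le> norm (b x)" by simp
qed

lemma ftilde:
  fixes f :: "real \<Rightarrow> real"
  assumes fi: "integrable lebesgue f" and bv: "BV0 (\<lambda>t. t * f t)"
  shows "integrable lborel (\<lambda>x. x * f x / x)"
    and "(LINT x|lebesgue. f x * sin (s * x)) = (LINT x|lborel. (x * f x / x) * sin (s * x))"
proof -
  have [measurable]: "(\<lambda>t. t * f t) \<in> borel_measurable borel" using BV0_borel[OF bv] .
  have m: "(\<lambda>x. x * f x / x) \<in> borel_measurable borel" by measurable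
  have ae: "AE x in lebesgue. f x = x * f x / x"
  proof (rule AE_completion)
    show "AE x in lborel. f x = x * f x / x"
      using AE_lborel_singleton[of 0] by eventually_elim simp
  qed
  have "integrable lebesgue (\<lambda>x. x * f x / x)"
  proof (rule integrable_cong_AE_imp[OF fi _ ae])
    show "(\<lambda>x. x * f x / x) \<in> borel_measurable lebesgue" using m by (auto intro: measurable_completion)
  qed
  then show i: "integrable lborel (\<lambda>x. x * f x / x)" by (subst (asm) integrable_completion) (use m in auto)
  have "(LINT x|lebesgue. f x * sin (s * x)) = (LINT x|lebesgue. (x * f x / x) * sin (s * x))"
  proof (rule integral_cong_AE)
    have [measurable]: "f \<in> borel_measurable lebesgue" using fi by auto
    have sm: "(\<lambda>x::real. sin (s * x)) \<in> borel_measurable borel"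
      by (intro borel_measurable_continuous_onI continuous_intros)
    have [measurable]: "(\<lambda>x::real. sin (s * x)) \<in> borel_measurable lebesgue"
      using sm by (auto intro: measurable_completion)
    have [measurable]: "(\<lambda>x. x * f x / x) \<in> borel_measurable lebesgue" using m by (auto intro: measurable_completion)
    show "(\<lambda>x. f x * sin (s * x)) \<in> borel_measurable lebesgue" by measurable
    show "(\<lambda>x. x * f x / x * sin (s * x)) \<in> borel_measurable lebesgue" by measurable
    show "AE x in lebesgue. f x * sin (s * x) = x * f x / x * sin (s * x)"
      using ae by eventually_elim simp
  qed
  also have "\<dots> = (LINT x|lborel. (x * f x / x) * sin (s * x))"
    by (rule integral_completion) (use m in auto)
  finally show "(LINT x|lebesgue. f x * sin (s * x)) = (LINT x|lborel. (x * f x / x) * sin (s * x))" .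
qed


lemma S_lip:
  fixes g :: "real \<Rightarrow> real"
  assumes bv: "BV0 g" and g0: "g 0 = 0" and fi: "integrable lborel (\<lambda>x. g x / x)" and \<delta>: "\<delta> > 0"
  shows "\<exists>L>0. \<forall>s1 s2. s1 \<le> s2 \<longrightarrow> (\<forall>u\<in>{s1..s2}. \<delta> \<le> \<bar>u\<bar>) \<longrightarrow>
     \<bar>(LINT x|lborel. g x / x * sin (s2 * x)) - (LINT x|lborel. g x / x * sin (s1 * x))\<bar> \<le> L * (s2 - s1)"
proof -
  obtain C where C0: "C \<ge> 0" and C: "\<And>R u. u \<noteq> 0 \<Longrightarrow> \<bar>LINT x|lborel. indicator {-R..R} x * g x * cos (u * x)\<bar> \<le> C / \<bar>u\<bar>"
    using g_cos_bound[OF bv] by blast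
  obtain Bg where Bg: "\<And>x. \<bar>g x\<bar> \<le> Bg" using BV0_bounded[OF bv] by blast
  have [measurable]: "g \<in> borel_measurable borel" using BV0_borel[OF bv] .
  define L where "L = C / \<delta> + 1"
  have L0: "L > 0" unfolding L_def using C0 \<delta> by (simp add: add_nonneg_pos)
  show ?thesis
  proof (intro exI[of _ L] conjI L0 allI impI)
    fix s1 s2 :: real assume s12: "s1 \<le> s2" and cond: "\<forall>u\<in>{s1..s2}. \<delta> \<le> \<bar>u\<bar>"
    define D where "D n = (LINT x|lborel. indicator {-real n..real n} x * ((g x / x) * (sin (s2 * x) - sin (s1 * x))))" for n :: nat
    have Dn: "\<bar>D n\<bar> \<le> (s2 - s1) * (C / \<delta>)" for n
    proof -
      have "D n = (LINT u|lborel. indicator {s1..s2} u * (LINT x|lborel. indicator {-real n..real n} x * g x * cos (u * x)))"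
        unfolding D_def by (rule diff_formula[where g=g, OF _ Bg s12 g0]) simp
      also have "\<bar>\<dots>\<bar> \<le> (LINT u|lborel. indicator {s1..s2} u * (C / \<delta>))"
      proof (rule abs_integral_le)
        show "integrable lborel (\<lambda>u. indicator {s1..s2} u * (C / \<delta>))"
          by (rule integrable_bounded_Icc[where K="C/\<delta>"]) (use C0 \<delta> in auto)
        fix u
        show "\<bar>indicator {s1..s2} u * (LINT x|lborel. indicator {-real n..real n} x * g x * cos (u * x))\<bar> \<le> indicator {s1..s2} u * (C / \<delta>)"
        proof (cases "u \<in> {s1..s2}")
          case True
          then have du: "\<delta> \<le> \<bar>u\<bar>" using cond by auto
          then have "u \<noteq> 0" using \<delta> by auto
          then have "\<bar>LINT x|lborel. indicator {-real n..real n} x * g x * cos (u * x)\<bar> \<le> C / \<bar>u\<bar>" by (rule C)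
          also have "\<dots> \<le> C / \<delta>" using du \<delta> C0 by (intro divide_left_mono) auto
          finally show ?thesis using True by simp
        qed simp
      qed
      also have "\<dots> = (s2 - s1) * (C / \<delta>)" using s12 by simp
      finally show ?thesis .
    qed
    have lim: "D \<longlonglongrightarrow> (LINT x|lborel. (g x / x) * (sin (s2 * x) - sin (s1 * x)))"
      unfolding D_def
    proof (rule integral_dominated_convergence[where w="\<lambda>x. 2 * \<bar>g x / x\<bar>"])
      show "(\<lambda>x. g x / x * (sin (s2 * x) - sin (s1 * x))) \<in> borel_measurable lborel" by measurable
      show "(\<lambda>x. indicator {-real n..real n} x * (g x / x * (sin (s2 * x) - sin (s1 * x)))) \<in> borel_measurable lborel" for n
        by measurable
      show "integrable lborel (\<lambda>x. 2 * \<bar>g x / x\<bar>)"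
        using integrable_mult_right[OF integrable_abs[OF fi], of 2] by simp
      show "AE x in lborel. (\<lambda>n. indicator {-real n..real n} x * (g x / x * (sin (s2 * x) - sin (s1 * x)))) \<longlonglongrightarrow> g x / x * (sin (s2 * x) - sin (s1 * x))"
      proof (rule AE_I2)
        fix x :: real
        have "eventually (\<lambda>n. indicator {-real n..real n} x * (g x / x * (sin (s2 * x) - sin (s1 * x))) = g x / x * (sin (s2 * x) - sin (s1 * x))) sequentially"
        proof (rule eventually_sequentiallyI[of "nat \<lceil>\<bar>x\<bar>\<rceil>"])
          fix n assume "nat \<lceil>\<bar>x\<bar>\<rceil> \<le> n"
          then have "\<bar>x\<bar> \<le> real n" by linarith
          then show "indicator {-real n..real n} x * (g x / x * (sin (s2 * x) - sin (s1 * x))) = g x / x * (sin (s2 * x) - sin (s1 * x))"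
            by (auto simp: indicator_def abs_le_iff)
        qed
        then show "(\<lambda>n. indicator {-real n..real n} x * (g x / x * (sin (s2 * x) - sin (s1 * x)))) \<longlonglongrightarrow> g x / x * (sin (s2 * x) - sin (s1 * x))"
          by (rule tendsto_eventually)
      qed
      show "AE x in lborel. norm (indicator {-real n..real n} x * (g x / x * (sin (s2 * x) - sin (s1 * x)))) \<le> 2 * \<bar>g x / x\<bar>" for n
      proof (rule AE_I2)
        fix x :: real
        have "\<bar>sin (s2 * x) - sin (s1 * x)\<bar> \<le> 2" using abs_sin_le_one[of "s2*x"] abs_sin_le_one[of "s1*x"] by linarith
        then have "\<bar>g x / x\<bar> * \<bar>sin (s2 * x) - sin (s1 * x)\<bar> \<le> \<bar>g x / x\<bar> * 2" by (intro mult_left_mono) auto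
        then show "norm (indicator {-real n..real n} x * (g x / x * (sin (s2 * x) - sin (s1 * x)))) \<le> 2 * \<bar>g x / x\<bar>"
          by (auto simp: indicator_def abs_mult mult.commute)
      qed
    qed
    have int_s: "integrable lborel (\<lambda>x. g x / x * sin (s * x))" for s
    proof (rule Bochner_Integration.integrable_bound[OF fi])
      show "(\<lambda>x. g x / x * sin (s * x)) \<in> borel_measurable lborel" by measurable
      show "AE x in lborel. norm (g x / x * sin (s * x)) \<le> norm (g x / x)"
      proof (rule AE_I2)
        fix x :: real
        have "\<bar>g x / x\<bar> * \<bar>sin (s * x)\<bar> \<le> \<bar>g x / x\<bar>"
          using abs_sin_le_one[of "s*x"] by (intro mult_right_le_one_le) auto
        then show "norm (g x / x * sin (s * x)) \<le> norm (g x / x)" by (simp only: real_norm_def abs_mult)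
      qed
    qed
    have "(LINT x|lborel. (g x / x) * (sin (s2 * x) - sin (s1 * x))) =
        (LINT x|lborel. g x / x * sin (s2 * x)) - (LINT x|lborel. g x / x * sin (s1 * x))"
      using int_s[of s2] int_s[of s1] by (simp add: right_diff_distrib)
    with lim have lim2: "D \<longlonglongrightarrow> (LINT x|lborel. g x / x * sin (s2 * x)) - (LINT x|lborel. g x / x * sin (s1 * x))" by simp
    have "\<bar>(LINT x|lborel. g x / x * sin (s2 * x)) - (LINT x|lborel. g x / x * sin (s1 * x))\<bar> \<le> (s2 - s1) * (C / \<delta>)"
      using Dn by (intro LIMSEQ_le_const2[OF tendsto_rabs[OF lim2]]) auto
    also have "\<dots> \<le> L * (s2 - s1)" unfolding L_def using s12 by (simp add: algebra_simps)
    finally show "\<bar>(LINT x|lborel. g x / x * sin (s2 * x)) - (LINT x|lborel. g x / x * sin (s1 * x))\<bar> \<le> L * (s2 - s1)" .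
  qed
qed


lemma main_given_F1:
  fixes p :: real and f :: "real \<Rightarrow> real" and G :: "real \<Rightarrow> complex"
  assumes p: "1 \<le> p" "p \<le> 2" and f: "Lp_real p f" and g: "Lp_real p (\<lambda>t. t * f t)"
    and bv: "BV0 (\<lambda>t. t * f t)" and ae: "AE s in lebesgue. G s = fourier1 f s"
  shows "\<exists>g. (AE s in lebesgue. g s = - Im (G s)) \<and> ACG_star g"
proof (intro exI conjI)
  have fi: "integrable lebesgue f" using f_integrable[OF p f g] .
  show "AE s in lebesgue. - Im (fourier1 f s) = - Im (G s)" using ae by eventually_elim simp
  show "ACG_star (\<lambda>s. - Im (fourier1 f s))"
  proof (rule ACG_from_lip)
    show "continuous_on UNIV (\<lambda>s. - Im (fourier1 f s))"
      using F1_cont[OF fi] by (intro continuous_intros) auto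
    fix \<delta> :: real assume \<delta>: "\<delta> > 0"
    have fi2: "integrable lborel (\<lambda>x. x * f x / x)" using ftilde(1)[OF fi bv] .
    obtain L where L0: "L > 0" and L: "\<And>s1 s2. s1 \<le> s2 \<Longrightarrow> (\<forall>u\<in>{s1..s2}. \<delta> \<le> \<bar>u\<bar>) \<Longrightarrow>
      \<bar>(LINT x|lborel. x * f x / x * sin (s2 * x)) - (LINT x|lborel. x * f x / x * sin (s1 * x))\<bar> \<le> L * (s2 - s1)"
      using S_lip[where g="\<lambda>t. t * f t", OF bv _ fi2 \<delta>] by auto
    have eq: "- Im (fourier1 f s) = (LINT x|lborel. x * f x / x * sin (s * x)) / sqrt (2 * pi)" for s
      using F1_sin[OF fi, of s] ftilde(2)[OF fi bv, of s] by simp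
    have sq: "1 \<le> sqrt (2 * pi)" using pi_gt3 by (simp add: real_le_rsqrt)
    show "\<exists>L>0. \<forall>s1 s2. s1 \<le> s2 \<longrightarrow> (\<forall>u\<in>{s1..s2}. \<delta> \<le> \<bar>u\<bar>) \<longrightarrow>
        \<bar>- Im (fourier1 f s2) - - Im (fourier1 f s1)\<bar> \<le> L * (s2 - s1)"
    proof (intro exI[of _ L] conjI L0 allI impI)
      fix s1 s2 :: real assume s: "s1 \<le> s2" "\<forall>u\<in>{s1..s2}. \<delta> \<le> \<bar>u\<bar>"
      let ?A = "(LINT x|lborel. x * f x / x * sin (s2 * x)) - (LINT x|lborel. x * f x / x * sin (s1 * x))"
      have "\<bar>- Im (fourier1 f s2) - - Im (fourier1 f s1)\<bar> = \<bar>?A\<bar> / sqrt (2 * pi)"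
        unfolding eq by (simp add: diff_divide_distrib[symmetric] abs_div)
      also have "\<dots> \<le> \<bar>?A\<bar>" using sq by (simp add: divide_le_eq mult_le_cancel_left1 order_trans[OF _ mult_right_mono])
      also have "\<dots> \<le> L * (s2 - s1)" using L[OF s] .
      finally show "\<bar>- Im (fourier1 f s2) - - Im (fourier1 f s1)\<bar> \<le> L * (s2 - s1)" .
    qed
  qed
qed


lemma sin_interval:
  fixes u a b :: real
  assumes "a \<le> b" "u \<noteq> 0"
  shows "(LINT x|lborel. indicator {a..b} x * sin (u * x)) = (cos (u * a) - cos (u * b)) / u"
proof -
  have "(LINT x|lborel. indicator {a..b} x *\<^sub>R sin (u * x)) = (- cos (u * b) / u) - (- cos (u * a) / u)"
  proof (rule integral_FTC_atLeastAtMost[OF assms(1)])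
    fix x show "((\<lambda>x. - cos (u * x) / u) has_vector_derivative sin (u * x)) (at x within {a..b})"
      using assms(2) by (auto intro!: derivative_eq_intros simp: has_real_derivative_iff_has_vector_derivative[symmetric])
  qed (intro continuous_intros)
  then show ?thesis by (simp add: diff_divide_distrib)
qed

lemma cis_interval:
  fixes u a b :: real
  assumes "a \<le> b"
  shows "(LINT x|lborel. indicator {a..b} x * cis (u * x)) =
    complex_of_real (LINT x|lborel. indicator {a..b} x * cos (u * x)) + \<i> * complex_of_real (LINT x|lborel. indicator {a..b} x * sin (u * x))"
proof -
  have i1: "integrable lborel (\<lambda>x. indicator {a..b} x * cos (u * x))"
    by (rule integrable_bounded_Icc[where K=1]) auto
  have i2: "integrable lborel (\<lambda>x. indicator {a..b} x * sin (u * x))"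
    by (rule integrable_bounded_Icc[where K=1]) auto
  have "(LINT x|lborel. indicator {a..b} x * cis (u * x)) =
      (LINT x|lborel. complex_of_real (indicator {a..b} x * cos (u * x)) + \<i> * complex_of_real (indicator {a..b} x * sin (u * x)))"
    by (rule Bochner_Integration.integral_cong) (auto simp: cis.code Complex_eq algebra_simps indicator_def)
  also have "\<dots> = (LINT x|lborel. complex_of_real (indicator {a..b} x * cos (u * x))) + (LINT x|lborel. \<i> * complex_of_real (indicator {a..b} x * sin (u * x)))"
  proof (rule Bochner_Integration.integral_add)
    show "complex_integrable lborel (\<lambda>x. complex_of_real (indicator {a..b} x * cos (u * x)))"
      using integrable_of_real[OF i1] .
    show "complex_integrable lborel (\<lambda>x. \<i> * complex_of_real (indicator {a..b} x * sin (u * x)))"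
      using integrable_mult_right[OF integrable_of_real[OF i2], of \<i>] .
  qed
  also have "\<dots> = complex_of_real (LINT x|lborel. indicator {a..b} x * cos (u * x)) + \<i> * complex_of_real (LINT x|lborel. indicator {a..b} x * sin (u * x))"
    by (simp only: integral_mult_right_zero integral_complex_of_real)
  finally show ?thesis .
qed

lemma orth:
  fixes T :: real and m :: int
  assumes T: "T > 0"
  shows "(LINT x|lborel. indicator {-T..T} x * cis (real_of_int m * (pi / T) * x)) = (if m = 0 then complex_of_real (2 * T) else 0)"
proof (cases "m = 0")
  case True
  have "(LINT x|lborel. indicator {-T..T} x * cis (real_of_int m * (pi / T) * x)) = (LINT x|lborel. complex_of_real (indicator {-T..T} x))"
    using True by (intro Bochner_Integration.integral_cong) (auto simp: indicator_def)
  also have "\<dots> = complex_of_real (2 * T)" using T by simp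
  finally show ?thesis using True by simp
next
  case False
  define u where "u = real_of_int m * (pi / T)"
  have u: "u \<noteq> 0" using False T unfolding u_def by simp
  have uT: "u * T = pi * real_of_int m" unfolding u_def using T by simp
  have c: "(LINT x|lborel. indicator {-T..T} x * cos (u * x)) = 0"
    using cos_interval[of "-T" T u] T u uT by simp
  have s: "(LINT x|lborel. indicator {-T..T} x * sin (u * x)) = 0"
    using sin_interval[of "-T" T u] T u by simp
  show ?thesis using cis_interval[of "-T" T u] T c s False unfolding u_def by simp
qed


lemma cis_meas_leb[measurable]: "(\<lambda>x::real. cis (a * x)) \<in> borel_measurable lebesgue"
  using cis_meas[of a] by (metis measurable_completion sets_lborel measurable_cong_sets measurable_lborel2)

lemma cnj_meas[measurable]:
  fixes f :: "'a \<Rightarrow> complex"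
  assumes [measurable]: "f \<in> borel_measurable M"
  shows "(\<lambda>x. cnj (f x)) \<in> borel_measurable M"
proof -
  have "(\<lambda>x. cnj (f x)) = (\<lambda>x. complex_of_real (Re (f x)) - \<i> * complex_of_real (Im (f x)))"
    by (auto simp: complex_eq_iff)
  then show ?thesis by simp
qed

lemma orth_leb:
  fixes T :: real and m :: int
  assumes T: "T > 0"
  shows "(LINT x|lebesgue. indicator {-T..T} x * cis (real_of_int m * (pi / T) * x)) = (if m = 0 then complex_of_real (2 * T) else 0)"
proof -
  have "(LINT x|lebesgue. indicator {-T..T} x * cis (real_of_int m * (pi / T) * x)) = (LINT x|lborel. indicator {-T..T} x * cis (real_of_int m * (pi / T) * x))"
    by (rule integral_completion) measurable
  then show ?thesis using orth[OF T] by simp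
qed

lemma bessel:
  fixes h :: "real \<Rightarrow> real" and T \<sigma> :: real and J :: "int set"
  assumes T: "T > 0" and hm[measurable]: "h \<in> borel_measurable lebesgue" and hi: "integrable lebesgue h"
    and h2: "integrable lebesgue (\<lambda>x. (h x)\<^sup>2)" and supp: "\<And>x. x \<notin> {-T..T} \<Longrightarrow> h x = 0" and J: "finite J"
  shows "(\<Sum>k\<in>J. (cmod (LINT x|lebesgue. complex_of_real (h x) * cis (- ((\<sigma> + real_of_int k * (pi / T)) * x))))\<^sup>2)
     \<le> 2 * T * (LINT x|lebesgue. (h x)\<^sup>2)"
proof -
  define \<omega> where "\<omega> = pi / T"
  define e where "e k x = cis ((\<sigma> + real_of_int k * \<omega>) * x)" for k :: int and x :: real
  define c where "c k = (LINT x|lebesgue. complex_of_real (h x) * cnj (e k x))" for k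
  define S where "S = (\<Sum>k\<in>J. (cmod (c k))\<^sup>2)"
  define \<Phi> where "\<Phi> x = (\<Sum>k\<in>J. c k * e k x)" for x
  define I where "I x = (indicator {-T..T} x :: real)" for x
  have em[measurable]: "e k \<in> borel_measurable lebesgue" for k
    unfolding e_def using cis_meas_leb[of "\<sigma> + real_of_int k * \<omega>"] by simp
  have \<Phi>m[measurable]: "\<Phi> \<in> borel_measurable lebesgue" unfolding \<Phi>_def by measurable
  have Iset: "{-T..T} \<in> sets lebesgue" by (rule sets_completionI_sets) simp
  have Im[measurable]: "I \<in> borel_measurable lebesgue" unfolding I_def[abs_def] using Iset by (rule borel_measurable_indicator)
  have lhs: "(\<Sum>k\<in>J. (cmod (LINT x|lebesgue. complex_of_real (h x) * cis (- ((\<sigma> + real_of_int k * (pi / T)) * x))))\<^sup>2) = S"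
    unfolding S_def c_def e_def \<omega>_def by (simp add: cis_cnj)
  have ne: "norm (e k x) = 1" for k x by (simp add: e_def)
  have inthe: "integrable lebesgue (\<lambda>x. complex_of_real (h x) * cnj (e k x))" for k
  proof (rule Bochner_Integration.integrable_bound[OF hi])
    show "(\<lambda>x. complex_of_real (h x) * cnj (e k x)) \<in> borel_measurable lebesgue" by measurable
  qed (auto simp: norm_mult ne)
  have step1: "(LINT x|lebesgue. complex_of_real (h x) * cnj (\<Phi> x)) = complex_of_real S"
  proof -
    have "(LINT x|lebesgue. complex_of_real (h x) * cnj (\<Phi> x)) = (LINT x|lebesgue. (\<Sum>k\<in>J. cnj (c k) * (complex_of_real (h x) * cnj (e k x))))"
      unfolding \<Phi>_def by (intro Bochner_Integration.integral_cong) (auto simp: sum_distrib_left algebra_simps)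
    also have "\<dots> = (\<Sum>k\<in>J. (LINT x|lebesgue. cnj (c k) * (complex_of_real (h x) * cnj (e k x))))"
      by (rule Bochner_Integration.integral_sum) (use inthe in auto)
    also have "\<dots> = (\<Sum>k\<in>J. cnj (c k) * c k)"
      unfolding c_def by (simp only: integral_mult_right_zero)
    also have "\<dots> = (\<Sum>k\<in>J. complex_of_real ((cmod (c k))\<^sup>2))"
    proof (rule sum.cong[OF refl])
      fix k show "cnj (c k) * c k = complex_of_real ((cmod (c k))\<^sup>2)"
        by (subst complex_norm_square) (rule mult.commute)
    qed
    also have "\<dots> = complex_of_real S"
      unfolding S_def by (simp only: of_real_sum)
    finally show ?thesis .
  qed
  have prod: "e j x * cnj (e k x) = cis (real_of_int (j - k) * (pi / T) * x)" for j k x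
    unfolding e_def \<omega>_def by (simp add: cis_cnj cis_mult algebra_simps)
  have intIe: "integrable lebesgue (\<lambda>x. complex_of_real (I x) * (e j x * cnj (e k x)))" for j k
  proof (rule integrableI_bounded_set[where A="{-T..T}" and B=1])
    show "emeasure lebesgue {-T..T} < \<infinity>" using T by (simp add: emeasure_lborel_Icc_eq)
    show "(\<lambda>x. complex_of_real (I x) * (e j x * cnj (e k x))) \<in> borel_measurable lebesgue" by measurable
  qed (auto simp: I_def norm_mult ne)
  have step2: "(LINT x|lebesgue. I x * (cmod (\<Phi> x))\<^sup>2) = 2 * T * S"
  proof -
    have "complex_of_real (LINT x|lebesgue. I x * (cmod (\<Phi> x))\<^sup>2) = (LINT x|lebesgue. complex_of_real (I x * (cmod (\<Phi> x))\<^sup>2))"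
      by (rule integral_complex_of_real[symmetric])
    also have "\<dots> = (LINT x|lebesgue. (\<Sum>j\<in>J. \<Sum>k\<in>J. (c j * cnj (c k)) * (complex_of_real (I x) * (e j x * cnj (e k x)))))"
    proof (intro Bochner_Integration.integral_cong refl)
      fix x
      have "complex_of_real (I x * (cmod (\<Phi> x))\<^sup>2) = complex_of_real (I x) * (\<Phi> x * cnj (\<Phi> x))"
        by (simp only: of_real_mult complex_norm_square)
      also have "\<dots> = (\<Sum>j\<in>J. \<Sum>k\<in>J. (c j * cnj (c k)) * (complex_of_real (I x) * (e j x * cnj (e k x))))"
        unfolding \<Phi>_def by (simp add: sum_distrib_left sum_distrib_right algebra_simps) (rule sum.swap)
      finally show "complex_of_real (I x * (cmod (\<Phi> x))\<^sup>2) = (\<Sum>j\<in>J. \<Sum>k\<in>J. (c j * cnj (c k)) * (complex_of_real (I x) * (e j x * cnj (e k x))))" .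
    qed
    also have "\<dots> = (\<Sum>j\<in>J. (LINT x|lebesgue. (\<Sum>k\<in>J. (c j * cnj (c k)) * (complex_of_real (I x) * (e j x * cnj (e k x))))))"
      by (rule Bochner_Integration.integral_sum) (use intIe in auto)
    also have "\<dots> = (\<Sum>j\<in>J. \<Sum>k\<in>J. (LINT x|lebesgue. (c j * cnj (c k)) * (complex_of_real (I x) * (e j x * cnj (e k x)))))"
      by (rule sum.cong[OF refl], rule Bochner_Integration.integral_sum) (use intIe in auto)
    also have "\<dots> = (\<Sum>j\<in>J. \<Sum>k\<in>J. (c j * cnj (c k)) * (LINT x|lebesgue. complex_of_real (I x) * (e j x * cnj (e k x))))"
      by (simp only: integral_mult_right_zero)
    also have "\<dots> = (\<Sum>j\<in>J. \<Sum>k\<in>J. (c j * cnj (c k)) * (if j = k then complex_of_real (2 * T) else 0))"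
    proof -
      have "(LINT x|lebesgue. complex_of_real (I x) * (e j x * cnj (e k x))) = (if j = k then complex_of_real (2 * T) else 0)" for j k
      proof -
        have "(LINT x|lebesgue. complex_of_real (I x) * (e j x * cnj (e k x))) =
            (LINT x|lebesgue. indicator {-T..T} x * cis (real_of_int (j - k) * (pi / T) * x))"
          by (intro Bochner_Integration.integral_cong) (auto simp: prod I_def indicator_def)
        then show ?thesis using orth_leb[OF T, of "j - k"] by simp
      qed
      then show ?thesis by simp
    qed
    also have "\<dots> = (\<Sum>j\<in>J. complex_of_real (2 * T * (cmod (c j))\<^sup>2))"
    proof (rule sum.cong[OF refl])
      fix j assume j: "j \<in> J"
      have "(\<Sum>k\<in>J. (c j * cnj (c k)) * (if j = k then complex_of_real (2 * T) else 0)) =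
          (\<Sum>k\<in>J. if k = j then c j * cnj (c j) * complex_of_real (2 * T) else 0)"
        by (rule sum.cong[OF refl]) auto
      also have "\<dots> = c j * cnj (c j) * complex_of_real (2 * T)" using J j by (simp add: sum.delta)
      also have "\<dots> = complex_of_real (2 * T * (cmod (c j))\<^sup>2)"
        by (simp only: complex_norm_square[symmetric] of_real_mult mult.commute)
      finally show "(\<Sum>k\<in>J. (c j * cnj (c k)) * (if j = k then complex_of_real (2 * T) else 0)) = complex_of_real (2 * T * (cmod (c j))\<^sup>2)" .
    qed
    also have "\<dots> = complex_of_real (2 * T * S)"
      unfolding S_def by (simp only: of_real_sum sum_distrib_left)
    finally show ?thesis by (simp only: of_real_eq_iff)
  qed
  have pw: "Re (complex_of_real (h x) * cnj (\<Phi> x)) \<le> T * (h x)\<^sup>2 + I x * (cmod (\<Phi> x))\<^sup>2 / (4 * T)" for x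
  proof (cases "x \<in> {-T..T}")
    case False
    then show ?thesis using supp[OF False] T by (simp add: I_def)
  next
    case True
    have "Re (complex_of_real (h x) * cnj (\<Phi> x)) \<le> cmod (complex_of_real (h x) * cnj (\<Phi> x))" by (rule complex_Re_le_cmod)
    also have "\<dots> = \<bar>h x\<bar> * cmod (\<Phi> x)" by (simp add: norm_mult)
    also have "\<dots> \<le> T * (h x)\<^sup>2 + (cmod (\<Phi> x))\<^sup>2 / (4 * T)"
    proof -
      have "0 \<le> (2 * T * \<bar>h x\<bar> - cmod (\<Phi> x))\<^sup>2" by simp
      then have "4 * T * (\<bar>h x\<bar> * cmod (\<Phi> x)) \<le> 4 * T * (T * (h x)\<^sup>2 + (cmod (\<Phi> x))\<^sup>2 / (4 * T))"
        using T by (simp add: power2_eq_square algebra_simps)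
      then show ?thesis using T by simp
    qed
    finally show ?thesis using True by (simp add: I_def)
  qed
  have int\<Phi>: "integrable lebesgue (\<lambda>x. I x * (cmod (\<Phi> x))\<^sup>2)"
  proof -
    have "integrable lebesgue (\<lambda>x. complex_of_real (I x * (cmod (\<Phi> x))\<^sup>2))"
    proof -
      have "(\<lambda>x. complex_of_real (I x * (cmod (\<Phi> x))\<^sup>2)) = (\<lambda>x. \<Sum>j\<in>J. \<Sum>k\<in>J. (c j * cnj (c k)) * (complex_of_real (I x) * (e j x * cnj (e k x))))"
      proof
        fix x
        have "complex_of_real (I x * (cmod (\<Phi> x))\<^sup>2) = complex_of_real (I x) * (\<Phi> x * cnj (\<Phi> x))"
          by (simp only: of_real_mult complex_norm_square)
        also have "\<dots> = (\<Sum>j\<in>J. \<Sum>k\<in>J. (c j * cnj (c k)) * (complex_of_real (I x) * (e j x * cnj (e k x))))"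
          unfolding \<Phi>_def by (simp add: sum_distrib_left sum_distrib_right algebra_simps) (rule sum.swap)
        finally show "complex_of_real (I x * (cmod (\<Phi> x))\<^sup>2) = (\<Sum>j\<in>J. \<Sum>k\<in>J. (c j * cnj (c k)) * (complex_of_real (I x) * (e j x * cnj (e k x))))" .
      qed
      then show ?thesis using intIe by (simp add: integrable_sum)
    qed
    from integrable_Re[OF this] show ?thesis by simp
  qed
  have intC: "integrable lebesgue (\<lambda>x. complex_of_real (h x) * cnj (\<Phi> x))"
    unfolding \<Phi>_def using inthe by (simp add: sum_distrib_left algebra_simps integrable_sum)
  have intRe: "integrable lebesgue (\<lambda>x. Re (complex_of_real (h x) * cnj (\<Phi> x)))"
    using intC by (rule integrable_Re)
  have "S = Re (LINT x|lebesgue. complex_of_real (h x) * cnj (\<Phi> x))" using step1 by simp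
  also have "\<dots> = (LINT x|lebesgue. Re (complex_of_real (h x) * cnj (\<Phi> x)))"
    by (rule integral_bounded_linear[OF bounded_linear_Re intC, symmetric])
  also have "\<dots> \<le> (LINT x|lebesgue. T * (h x)\<^sup>2 + I x * (cmod (\<Phi> x))\<^sup>2 / (4 * T))"
    by (rule integral_mono[OF intRe]) (use h2 int\<Phi> pw in auto)
  also have "\<dots> = T * (LINT x|lebesgue. (h x)\<^sup>2) + (2 * T * S) / (4 * T)"
    using h2 int\<Phi> step2 by simp
  also have "\<dots> = T * (LINT x|lebesgue. (h x)\<^sup>2) + S / 2" using T by simp
  finally have "S \<le> T * (LINT x|lebesgue. (h x)\<^sup>2) + S / 2" .
  then show ?thesis using lhs by simp
qed


lemma F1_L2:
  fixes h :: "real \<Rightarrow> real" and T :: real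
  assumes T: "T > 0" and hm[measurable]: "h \<in> borel_measurable lebesgue" and hi: "integrable lebesgue h"
    and h2: "integrable lebesgue (\<lambda>x. (h x)\<^sup>2)" and supp: "\<And>x. x \<notin> {-T..T} \<Longrightarrow> h x = 0"
  shows "integrable lborel (\<lambda>s. (cmod (fourier1 h s))\<^sup>2)"
proof -
  define \<omega> where "\<omega> = pi / T"
  have \<omega>0: "\<omega> > 0" unfolding \<omega>_def using T by simp
  define H2 where "H2 = (LINT x|lebesgue. (h x)\<^sup>2)"
  have H20: "0 \<le> H2" unfolding H2_def by simp
  define q where "q s = (cmod (fourier1 h s))\<^sup>2" for s
  have qc: "continuous_on UNIV q" unfolding q_def using F1_cont[OF hi] by (intro continuous_intros) auto
  have qm[measurable]: "q \<in> borel_measurable borel" using qc by (rule borel_measurable_continuous_onI)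
  have q0: "0 \<le> q s" for s unfolding q_def by simp
  have bes: "(\<Sum>k\<in>J. q (\<sigma> + real_of_int k * \<omega>)) \<le> H2 / \<omega>" if J: "finite J" for J :: "int set" and \<sigma>
  proof -
    have qeq: "q s = (cmod (LINT x|lebesgue. complex_of_real (h x) * cis (- (s * x))))\<^sup>2 / (2 * pi)" for s
    proof -
      have "fourier1 h s = (LINT x|lebesgue. complex_of_real (h x) * cis (- (s * x))) / complex_of_real (sqrt (2 * pi))"
        unfolding fourier1_def by (simp add: mult.commute)
      then show ?thesis unfolding q_def by (simp add: norm_divide power_divide)
    qed
    have "(\<Sum>k\<in>J. q (\<sigma> + real_of_int k * \<omega>)) =
        (\<Sum>k\<in>J. (cmod (LINT x|lebesgue. complex_of_real (h x) * cis (- ((\<sigma> + real_of_int k * (pi / T)) * x))))\<^sup>2) / (2 * pi)"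
      unfolding qeq \<omega>_def by (simp add: sum_divide_distrib)
    also have "\<dots> \<le> (2 * T * H2) / (2 * pi)"
      unfolding H2_def by (rule divide_right_mono[OF bessel[OF T hm hi h2 supp J]]) (use pi_gt_zero in linarith)+
    also have "\<dots> = H2 / \<omega>" unfolding \<omega>_def using T by (simp add: field_simps)
    finally show ?thesis .
  qed
  define B where "B N = {- real N * \<omega> ..< real N * \<omega>}" for N :: nat
  define P where "P k = {real_of_int k * \<omega> ..< (real_of_int k + 1) * \<omega>}" for k :: int
  have transl: "(\<integral>\<^sup>+ s. indicator (P k) s * ennreal (q s) \<partial>lborel) =
      (\<integral>\<^sup>+ \<sigma>. indicator {0..<\<omega>} \<sigma> * ennreal (q (\<sigma> + real_of_int k * \<omega>)) \<partial>lborel)" for k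
  proof -
    have "(\<integral>\<^sup>+ s. indicator (P k) s * ennreal (q s) \<partial>lborel) =
        (\<integral>\<^sup>+ s. indicator (P k) s * ennreal (q s) \<partial>distr lborel borel ((+) (real_of_int k * \<omega>)))"
      by (simp add: lborel_distr_plus)
    also have "\<dots> = (\<integral>\<^sup>+ \<sigma>. indicator (P k) (real_of_int k * \<omega> + \<sigma>) * ennreal (q (real_of_int k * \<omega> + \<sigma>)) \<partial>lborel)"
      by (rule nn_integral_distr) (auto simp: P_def)
    also have "\<dots> = (\<integral>\<^sup>+ \<sigma>. indicator {0..<\<omega>} \<sigma> * ennreal (q (\<sigma> + real_of_int k * \<omega>)) \<partial>lborel)"
      by (intro nn_integral_cong) (auto simp: P_def indicator_def algebra_simps)
    finally show ?thesis .
  qed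
  have blockN: "(\<integral>\<^sup>+ s. indicator (B N) s * ennreal (q s) \<partial>lborel) \<le> ennreal H2" for N
  proof -
    let ?K = "{- int N ..< int N}"
    have "(\<integral>\<^sup>+ s. indicator (B N) s * ennreal (q s) \<partial>lborel) \<le> (\<integral>\<^sup>+ s. (\<Sum>k\<in>?K. indicator (P k) s * ennreal (q s)) \<partial>lborel)"
    proof (rule nn_integral_mono)
      fix s
      show "indicator (B N) s * ennreal (q s) \<le> (\<Sum>k\<in>?K. indicator (P k) s * ennreal (q s))"
      proof (cases "s \<in> B N")
        case False then show ?thesis by simp
      next
        case True
        define k0 where "k0 = \<lfloor>s / \<omega>\<rfloor>"
        have a: "real_of_int k0 * \<omega> \<le> s" unfolding k0_def using \<omega>0
          by (metis floor_divide_lower)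
        have b: "s < (real_of_int k0 + 1) * \<omega>" unfolding k0_def using \<omega>0
          by (metis floor_divide_upper)
        have sB: "- real N * \<omega> \<le> s" "s < real N * \<omega>" using True unfolding B_def by auto
        have "- real N < real_of_int k0 + 1" using sB(1) b \<omega>0
          by (smt (verit, ccfv_SIG) mult_le_cancel_right)
        moreover have "real_of_int k0 < real N" using sB(2) a \<omega>0
          by (smt (verit, ccfv_SIG) mult_le_cancel_right)
        ultimately have k0K: "k0 \<in> ?K" by auto
        have "indicator (B N) s * ennreal (q s) = indicator (P k0) s * ennreal (q s)"
          using True a b unfolding P_def by simp
        also have "\<dots> \<le> (\<Sum>k\<in>?K. indicator (P k) s * ennreal (q s))"
          by (rule member_le_sum) (use k0K in auto)
        finally show ?thesis .
      qed
    qed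
    also have "\<dots> = (\<Sum>k\<in>?K. \<integral>\<^sup>+ s. indicator (P k) s * ennreal (q s) \<partial>lborel)"
      by (rule nn_integral_sum) (auto simp: P_def)
    also have "\<dots> = (\<Sum>k\<in>?K. \<integral>\<^sup>+ \<sigma>. indicator {0..<\<omega>} \<sigma> * ennreal (q (\<sigma> + real_of_int k * \<omega>)) \<partial>lborel)"
      using transl by simp
    also have "\<dots> = (\<integral>\<^sup>+ \<sigma>. (\<Sum>k\<in>?K. indicator {0..<\<omega>} \<sigma> * ennreal (q (\<sigma> + real_of_int k * \<omega>))) \<partial>lborel)"
      by (rule nn_integral_sum[symmetric]) auto
    also have "\<dots> \<le> (\<integral>\<^sup>+ \<sigma>. indicator {0..<\<omega>} \<sigma> * ennreal (H2 / \<omega>) \<partial>lborel)"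
    proof (rule nn_integral_mono)
      fix \<sigma>
      have "(\<Sum>k\<in>?K. indicator {0..<\<omega>} \<sigma> * ennreal (q (\<sigma> + real_of_int k * \<omega>))) =
          indicator {0..<\<omega>} \<sigma> * ennreal (\<Sum>k\<in>?K. q (\<sigma> + real_of_int k * \<omega>))"
        by (simp add: sum_distrib_left[symmetric] q0)
      also have "\<dots> \<le> indicator {0..<\<omega>} \<sigma> * ennreal (H2 / \<omega>)"
        using bes[of ?K \<sigma>] by (intro mult_left_mono ennreal_leI) auto
      finally show "(\<Sum>k\<in>?K. indicator {0..<\<omega>} \<sigma> * ennreal (q (\<sigma> + real_of_int k * \<omega>))) \<le> indicator {0..<\<omega>} \<sigma> * ennreal (H2 / \<omega>)" .
    qed
    also have "\<dots> = ennreal H2"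
      using \<omega>0 H20 by (simp add: nn_integral_cmult_indicator ennreal_mult[symmetric] mult.commute)
    finally show ?thesis .
  qed
  have "(\<integral>\<^sup>+ s. ennreal (q s) \<partial>lborel) = (\<integral>\<^sup>+ s. (SUP N. indicator (B N) s * ennreal (q s)) \<partial>lborel)"
  proof (rule nn_integral_cong)
    fix s :: real
    obtain N :: nat where N: "\<bar>s\<bar> / \<omega> < real N" using reals_Archimedean2 by blast
    have "s \<in> B N"
    proof -
      have "\<bar>s\<bar> < real N * \<omega>" using N \<omega>0 by (simp add: divide_less_eq)
      then show ?thesis unfolding B_def by auto
    qed
    have mono: "indicator (B M) s * ennreal (q s) \<le> ennreal (q s)" for M
      by (simp add: indicator_def)
    show "ennreal (q s) = (SUP N. indicator (B N) s * ennreal (q s))"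
      by (rule antisym) (use \<open>s \<in> B N\<close> mono in \<open>auto intro!: SUP_upper2[of N] SUP_least\<close>)
  qed
  also have "\<dots> = (SUP N. \<integral>\<^sup>+ s. indicator (B N) s * ennreal (q s) \<partial>lborel)"
  proof (rule nn_integral_monotone_convergence_SUP)
    show "incseq (\<lambda>N s. indicator (B N) s * ennreal (q s))"
    proof (rule incseq_SucI, rule le_funI)
      fix N s
      have "B N \<subseteq> B (Suc N)" unfolding B_def using \<omega>0 by (auto simp: algebra_simps)
      then show "indicator (B N) s * ennreal (q s) \<le> indicator (B (Suc N)) s * ennreal (q s)"
        by (auto simp: indicator_def)
    qed
  qed (auto simp: B_def)
  also have "\<dots> \<le> ennreal H2" using blockN by (rule SUP_least)
  finally have fin: "(\<integral>\<^sup>+ s. ennreal (q s) \<partial>lborel) \<le> ennreal H2" .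
  show ?thesis
    unfolding q_def[symmetric]
  proof (rule integrableI_bounded)
    show "q \<in> borel_measurable lborel" by simp
    have "(\<integral>\<^sup>+ s. ennreal (norm (q s)) \<partial>lborel) = (\<integral>\<^sup>+ s. ennreal (q s) \<partial>lborel)" using q0 by simp
    then show "(\<integral>\<^sup>+ s. ennreal (norm (q s)) \<partial>lborel) < \<infinity>" using fin by (simp add: order_le_less_trans)
  qed
qed


lemma sq_sum_le: "(a + b)\<^sup>2 \<le> 2 * a\<^sup>2 + 2 * (b::real)\<^sup>2"
proof -
  have "0 \<le> (a - b)\<^sup>2" by simp
  then show ?thesis by (simp add: power2_eq_square algebra_simps)
qed

lemma F1_pointwise_lim:
  fixes h :: "real \<Rightarrow> real"
  assumes hi: "integrable lebesgue h"
  shows "(\<lambda>n::nat. fourier1 (\<lambda>x. indicator {-real n..real n} x * h x) s) \<longlonglongrightarrow> fourier1 h s"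
proof -
  have [measurable]: "h \<in> borel_measurable lebesgue" using hi by auto
  have Iset: "{-real n..real n} \<in> sets lebesgue" for n :: nat by (rule sets_completionI_sets) simp
  have Im[measurable]: "(\<lambda>x. indicator {-real n..real n} x :: real) \<in> borel_measurable lebesgue" for n :: nat
    using Iset by (rule borel_measurable_indicator)
  have "(\<lambda>n::nat. LINT x|lebesgue. cis (- s * x) * complex_of_real (indicator {-real n..real n} x * h x)) \<longlonglongrightarrow>
      (LINT x|lebesgue. cis (- s * x) * complex_of_real (h x))"
  proof (rule integral_dominated_convergence[where w="\<lambda>x. norm (h x)"])
    show "(\<lambda>x. cis (- s * x) * complex_of_real (h x)) \<in> borel_measurable lebesgue" by measurable
    show "(\<lambda>x. cis (- s * x) * complex_of_real (indicator {-real n..real n} x * h x)) \<in> borel_measurable lebesgue" for n :: nat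
      by measurable
    show "integrable lebesgue (\<lambda>x. norm (h x))" using hi by auto
    show "AE x in lebesgue. (\<lambda>n::nat. cis (- s * x) * complex_of_real (indicator {-real n..real n} x * h x)) \<longlonglongrightarrow> cis (- s * x) * complex_of_real (h x)"
    proof (rule AE_I2)
      fix x :: real
      have "eventually (\<lambda>n::nat. cis (- s * x) * complex_of_real (indicator {-real n..real n} x * h x) = cis (- s * x) * complex_of_real (h x)) sequentially"
      proof (rule eventually_sequentiallyI[of "nat \<lceil>\<bar>x\<bar>\<rceil>"])
        fix n assume "nat \<lceil>\<bar>x\<bar>\<rceil> \<le> n"
        then have "\<bar>x\<bar> \<le> real n" by linarith
        then show "cis (- s * x) * complex_of_real (indicator {-real n..real n} x * h x) = cis (- s * x) * complex_of_real (h x)"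
          by (auto simp: indicator_def abs_le_iff)
      qed
      then show "(\<lambda>n::nat. cis (- s * x) * complex_of_real (indicator {-real n..real n} x * h x)) \<longlonglongrightarrow> cis (- s * x) * complex_of_real (h x)"
        by (rule tendsto_eventually)
    qed
    show "AE x in lebesgue. norm (cis (- s * x) * complex_of_real (indicator {-real n..real n} x * h x)) \<le> norm (h x)" for n :: nat
      by (rule AE_I2) (auto simp: norm_mult indicator_def)
  qed
  then show ?thesis unfolding fourier1_def by (intro tendsto_intros) auto
qed

lemma KL:
  fixes h :: "real \<Rightarrow> real" and H :: "real \<Rightarrow> complex"
  assumes hi: "integrable lebesgue h" and h2: "integrable lebesgue (\<lambda>x. (h x)\<^sup>2)"
    and Hm[measurable]: "H \<in> borel_measurable lebesgue" and H2: "integrable lebesgue (\<lambda>s. (cmod (H s))\<^sup>2)"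
    and lim: "(\<lambda>n::nat. LINT s|lebesgue. (cmod (fourier1 (\<lambda>x. indicator {-real n..real n} x * h x) s - H s))\<^sup>2) \<longlonglongrightarrow> 0"
  shows "AE s in lebesgue. H s = fourier1 h s"
proof -
  have hm[measurable]: "h \<in> borel_measurable lebesgue" using hi by auto
  define hn where "hn n x = indicator {-real n..real n} x * h x" for n :: nat and x
  have Iset: "{-real n..real n} \<in> sets lebesgue" for n :: nat by (rule sets_completionI_sets) simp
  have Im[measurable]: "(\<lambda>x. indicator {-real n..real n} x :: real) \<in> borel_measurable lebesgue" for n :: nat
    using Iset by (rule borel_measurable_indicator)
  have hnm[measurable]: "hn n \<in> borel_measurable lebesgue" for n unfolding hn_def by measurable
  have hni: "integrable lebesgue (hn n)" for n
  proof (rule Bochner_Integration.integrable_bound[OF hi])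
    show "hn n \<in> borel_measurable lebesgue" by (rule hnm)
  qed (auto simp: hn_def indicator_def)
  have hn2: "integrable lebesgue (\<lambda>x. (hn n x)\<^sup>2)" for n
  proof (rule Bochner_Integration.integrable_bound[OF h2])
    show "(\<lambda>x. (hn n x)\<^sup>2) \<in> borel_measurable lebesgue" by measurable
  qed (auto simp: hn_def indicator_def)
  have supp: "x \<notin> {-(real n + 1)..real n + 1} \<Longrightarrow> hn n x = 0" for n x by (auto simp: hn_def indicator_def)
  have Fc: "continuous_on UNIV (fourier1 g)" if "integrable lebesgue g" for g using F1_cont[OF that] .
  have Fm[measurable]: "fourier1 (hn n) \<in> borel_measurable lebesgue" for n
    using borel_measurable_continuous_onI[OF Fc[OF hni[of n]]] by (auto intro: measurable_completion)
  have Fhm[measurable]: "fourier1 h \<in> borel_measurable lebesgue"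
    using borel_measurable_continuous_onI[OF Fc[OF hi]] by (auto intro: measurable_completion)
  have FL2: "integrable lebesgue (\<lambda>s. (cmod (fourier1 (hn n) s))\<^sup>2)" for n
  proof -
    have "integrable lborel (\<lambda>s. (cmod (fourier1 (hn n) s))\<^sup>2)"
      by (rule F1_L2[of "real n + 1"]) (use hni hn2 supp in auto)
    moreover have "(\<lambda>s. (cmod (fourier1 (hn n) s))\<^sup>2) \<in> borel_measurable borel"
      using borel_measurable_continuous_onI[OF Fc[OF hni[of n]]] by measurable
    ultimately show ?thesis by (subst integrable_completion) auto
  qed
  define D where "D n s = (cmod (fourier1 (hn n) s - H s))\<^sup>2" for n s
  have Dm[measurable]: "D n \<in> borel_measurable lebesgue" for n unfolding D_def by measurable
  have Di: "integrable lebesgue (D n)" for n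
  proof (rule Bochner_Integration.integrable_bound)
    show "integrable lebesgue (\<lambda>s. 2 * (cmod (fourier1 (hn n) s))\<^sup>2 + 2 * (cmod (H s))\<^sup>2)"
      using FL2[of n] H2 by auto
    show "AE s in lebesgue. norm (D n s) \<le> norm (2 * (cmod (fourier1 (hn n) s))\<^sup>2 + 2 * (cmod (H s))\<^sup>2)"
    proof (rule AE_I2)
      fix s
      have t: "cmod (fourier1 (hn n) s - H s) \<le> cmod (fourier1 (hn n) s) + cmod (H s)" by (rule norm_triangle_ineq4)
      have "(cmod (fourier1 (hn n) s - H s))\<^sup>2 \<le> (cmod (fourier1 (hn n) s) + cmod (H s))\<^sup>2"
        using t by (intro power_mono) auto
      also have "\<dots> \<le> 2 * (cmod (fourier1 (hn n) s))\<^sup>2 + 2 * (cmod (H s))\<^sup>2"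
        by (rule sq_sum_le)
      finally show "norm (D n s) \<le> norm (2 * (cmod (fourier1 (hn n) s))\<^sup>2 + 2 * (cmod (H s))\<^sup>2)"
        unfolding D_def by simp
    qed
  qed measurable
  have ptw: "(\<lambda>n. ennreal (D n s)) \<longlonglongrightarrow> ennreal ((cmod (fourier1 h s - H s))\<^sup>2)" for s
    unfolding D_def hn_def using F1_pointwise_lim[OF hi, of s]
    by (intro tendsto_ennrealI tendsto_intros) auto
  have "(\<integral>\<^sup>+ s. ennreal ((cmod (fourier1 h s - H s))\<^sup>2) \<partial>lebesgue) = (\<integral>\<^sup>+ s. liminf (\<lambda>n. ennreal (D n s)) \<partial>lebesgue)"
    by (intro nn_integral_cong) (simp add: lim_imp_Liminf[OF _ ptw])
  also have "\<dots> \<le> liminf (\<lambda>n. \<integral>\<^sup>+ s. ennreal (D n s) \<partial>lebesgue)"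
    by (rule nn_integral_liminf) measurable
  also have "\<dots> = liminf (\<lambda>n. ennreal (LINT s|lebesgue. D n s))"
  proof -
    have "(\<integral>\<^sup>+ s. ennreal (D n s) \<partial>lebesgue) = ennreal (LINT s|lebesgue. D n s)" for n
      by (rule nn_integral_eq_integral[OF Di]) (simp add: D_def)
    then show ?thesis by simp
  qed
  also have "\<dots> = ennreal 0"
  proof (rule lim_imp_Liminf)
    show "(\<lambda>n. ennreal (LINT s|lebesgue. D n s)) \<longlonglongrightarrow> ennreal 0"
      using lim unfolding D_def hn_def by (intro tendsto_ennrealI)
  qed simp
  finally have z: "(\<integral>\<^sup>+ s. ennreal ((cmod (fourier1 h s - H s))\<^sup>2) \<partial>lebesgue) = 0" by simp
  have "AE s in lebesgue. ennreal ((cmod (fourier1 h s - H s))\<^sup>2) = 0"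
    using z by (subst (asm) nn_integral_0_iff_AE) auto
  then show ?thesis by eventually_elim simp
qed


lemma abs_powr_2: "\<bar>a::real\<bar> powr 2 = a\<^sup>2"
proof (cases "a = 0")
  case False
  then have "\<bar>a\<bar> powr 2 = \<bar>a\<bar> ^ 2" by (subst powr_numeral) auto
  then show ?thesis by simp
qed simp

lemma fourier1_add:
  assumes "integrable lebesgue f1" "integrable lebesgue f2"
  shows "fourier1 (\<lambda>x. f1 x + f2 x) s = fourier1 f1 s + fourier1 f2 s"
proof -
  have "(LINT x|lebesgue. cis (- s * x) * complex_of_real (f1 x + f2 x)) =
      (LINT x|lebesgue. cis (- s * x) * complex_of_real (f1 x) + cis (- s * x) * complex_of_real (f2 x))"
    by (simp add: distrib_left)
  also have "\<dots> = (LINT x|lebesgue. cis (- s * x) * complex_of_real (f1 x)) + (LINT x|lebesgue. cis (- s * x) * complex_of_real (f2 x))"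
    by (rule Bochner_Integration.integral_add[OF F1_integrable[OF assms(1)] F1_integrable[OF assms(2)]])
  finally show ?thesis unfolding fourier1_def by (simp add: add_divide_distrib)
qed

lemma fourier_p_eq:
  fixes p :: real and f :: "real \<Rightarrow> real" and G :: "real \<Rightarrow> complex"
  assumes fi: "integrable lebesgue f" and fp: "is_fourier_p p f G"
  shows "AE s in lebesgue. G s = fourier1 f s"
proof (cases "p = 1")
  case True
  then show ?thesis using fp unfolding is_fourier_p_def by simp
next
  case False
  then obtain f1 f2 H where sum: "\<forall>x. f x = f1 x + f2 x" and f1i: "integrable lebesgue f1"
    and f2L: "Lp_real 2 f2" and H: "is_fourier2 f2 H" and ae: "AE s in lebesgue. G s = fourier1 f1 s + H s"
    using fp unfolding is_fourier_p_def by auto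
  have feq: "f = (\<lambda>x. f1 x + f2 x)" using sum by auto
  have f2eq: "f2 = (\<lambda>x. f x - f1 x)" using sum by auto
  have f2i: "integrable lebesgue f2" unfolding f2eq using fi f1i by auto
  have f2sq: "integrable lebesgue (\<lambda>x. (f2 x)\<^sup>2)" using f2L unfolding Lp_real_def abs_powr_2 by simp
  have Hm: "H \<in> borel_measurable lebesgue" and H2: "integrable lebesgue (\<lambda>s. (cmod (H s))\<^sup>2)"
    and lim: "(\<lambda>n::nat. LINT s|lebesgue. (cmod (fourier1 (\<lambda>x. indicator {-real n..real n} x * f2 x) s - H s))\<^sup>2) \<longlonglongrightarrow> 0"
    using H unfolding is_fourier2_def by auto
  have "AE s in lebesgue. H s = fourier1 f2 s" by (rule KL[OF f2i f2sq Hm H2 lim])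
  with ae show ?thesis
  proof eventually_elim
    case (elim s)
    then show ?case using fourier1_add[OF f1i f2i, of s] feq by simp
  qed
qed

theorem mainTheorem9:
  fixes p :: real and f :: "real \<Rightarrow> real" and G :: "real \<Rightarrow> complex"
  assumes "1 \<le> p" and "p \<le> 2"
    and "Lp_real p f"
    and "Lp_real p (\<lambda>t. t * f t)" and "BV0 (\<lambda>t. t * f t)"
    and "is_fourier_p p f G"
  shows "\<exists>g. (AE s in lebesgue. g s = - Im (G s)) \<and> ACG_star g"
proof -
  have fi: "integrable lebesgue f" using f_integrable[OF assms(1-4)] .
  show ?thesis using main_given_F1[OF assms(1-5) fourier_p_eq[OF fi assms(6)]] .
qed


end
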